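(* Let $(G,c)$ be a colored DAG and let $S_G=\{\prod_{i\in V}|\Sigma_{\mathrm{pa}_G(i)}|^{k_i}: k_i\in\mathbb N\}$ be the multiplicatively closed set generated by the parental principal minors. Then the vanishing ideal $P_{G,c}$ of $\mathcal M(G,c)$ equals $I_{G,c}:S_G$.
   Context: $\mathbb R[\Sigma]$ is the polynomial ring in symmetric variables $\sigma_{ij}=\sigma_{ji}$; $\Sigma_B$ principal submatrix (with $|\Sigma_\emptyset|=1$); $\Sigma_{ij|K}$ the submatrix with rows $(i,K)$, columns $(j,K)$; $J:S=\{f: fs\in J\text{ for some } s\in S\}$. $G=(V,E)$ a DAG with $V=[p]$ naturally ordered; $c:V\sqcup E\to C$, $c(V)\cap c(E)=\emptyset$. $\mathcal M(G,c)$ is the set of $(I-\Lambda)^{-T}\Omega(I-\Lambda)^{-1}$ with $\Omega=\mathrm{diag}(\omega_i)$, $\omega_i>0$, $\lambda_{ij}=0$ for $ij\notin E$, $\omega_i=\omega_k$ when $c(i)=c(k)$, $\lambda_{ij}=\lambda_{kl}$ when $c(ij)=c(kl)$; $P_{G,c}$ is the ideal of polynomials vanishing on $\mathcal M(G,c)$. $I_{G,c}$ is generated by: $|\Sigma_{ij|\mathrm{pa}(j)}|$ for $i<j$, $ij\notin E$; $|\Sigma_{\{i\}\cup\mathrm{pa}(i)}|\,|\Sigma_{\mathrm{pa}(j)}|-|\Sigma_{\{j\}\cup\mathrm{pa}(j)}|\,|\Sigma_{\mathrm{pa}(i)}|$ for $c(i)=c(j)$; $|\Sigma_{ij|\mathrm{pa}(j)\setminus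 i}|\,|\Sigma_{\mathrm{pa}(l)}|-|\Sigma_{kl|\mathrm{pa}(l)\setminus k}|\,|\Sigma_{\mathrm{pa}(j)}|$ for $c(ij)=c(kl)$. *)

theory Defs
  imports "Jordan_Normal_Form.Determinant" "HOL-Library.Poly_Mapping"
begin

text \<open>Polynomials in variables x_(a,b) with real coefficients, as finitely supported
  maps from monomials (finitely supported exponent vectors) to coefficients.
  The symmetric ring R[Sigma] on vertex set V = {0..<p} is the subring of polynomials
  using only the variables x_(a,b) with a \<le> b < p; sigma_ab = sigma_ba = x_(min,max).\<close>

type_synonym mpoly = "((nat \<times> nat) \<Rightarrow>\<^sub>0 nat) \<Rightarrow>\<^sub>0 real"

definition in_sym_ring :: "nat \<Rightarrow> mpoly \<Rightarrow> bool" where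
  "in_sym_ring p f \<longleftrightarrow> (\<forall>m \<in> Poly_Mapping.keys f. \<forall>v \<in> Poly_Mapping.keys m. fst v \<le> snd v \<and> snd v < p)"

definition sym_ring :: "nat \<Rightarrow> mpoly set" where
  "sym_ring p = {f. in_sym_ring p f}"

definition sigma :: "nat \<Rightarrow> nat \<Rightarrow> mpoly" where
  "sigma a b = Poly_Mapping.single (Poly_Mapping.single (min a b, max a b) 1) 1"

definition eval_poly :: "real mat \<Rightarrow> mpoly \<Rightarrow> real" where
  "eval_poly S f = (\<Sum>m \<in> Poly_Mapping.keys f. Poly_Mapping.lookup f m *
      (\<Prod>v \<in> Poly_Mapping.keys m. (S $$ (fst v, snd v)) ^ Poly_Mapping.lookup m v))"

definition submat_sym :: "nat list \<Rightarrow> nat list \<Rightarrow> mpoly mat" where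
  "submat_sym rs cs = mat (length rs) (length cs) (\<lambda>(a, b). sigma (rs ! a) (cs ! b))"

definition pminor :: "nat set \<Rightarrow> mpoly" where
  "pminor B = det (submat_sym (sorted_list_of_set B) (sorted_list_of_set B))"

definition cminor :: "nat \<Rightarrow> nat \<Rightarrow> nat set \<Rightarrow> mpoly" where
  "cminor i j K = det (submat_sym (i # sorted_list_of_set K) (j # sorted_list_of_set K))"

definition pa :: "(nat \<times> nat) set \<Rightarrow> nat \<Rightarrow> nat set" where
  "pa E j = {i. (i, j) \<in> E}"

text \<open>DAG on V = {0..<p}, naturally ordered: every edge (i,j) has i < j.\<close>
definition dag :: "nat \<Rightarrow> (nat \<times> nat) set \<Rightarrow> bool" where
  "dag p E \<longleftrightarrow> (\<forall>(i, j) \<in> E. i < j \<and> j < p)"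

definition coloring :: "nat \<Rightarrow> (nat \<times> nat) set \<Rightarrow> (nat \<Rightarrow> 'c) \<Rightarrow> (nat \<times> nat \<Rightarrow> 'c) \<Rightarrow> bool" where
  "coloring p E cV cE \<longleftrightarrow> cV ` {0..<p} \<inter> cE ` E = {}"

definition model :: "nat \<Rightarrow> (nat \<times> nat) set \<Rightarrow> (nat \<Rightarrow> 'c) \<Rightarrow> (nat \<times> nat \<Rightarrow> 'c) \<Rightarrow> real mat set" where
  "model p E cV cE = {transpose_mat B * Om * B | B Om Lam.
      Lam \<in> carrier_mat p p \<and> Om \<in> carrier_mat p p \<and> B \<in> carrier_mat p p \<and>
      (\<forall>i<p. \<forall>j<p. i \<noteq> j \<longrightarrow> Om $$ (i, j) = 0) \<and>
      (\<forall>i<p. Om $$ (i, i) > 0) \<and>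
      (\<forall>i<p. \<forall>j<p. (i, j) \<notin> E \<longrightarrow> Lam $$ (i, j) = 0) \<and>
      (\<forall>i<p. \<forall>k<p. cV i = cV k \<longrightarrow> Om $$ (i, i) = Om $$ (k, k)) \<and>
      (\<forall>(i, j) \<in> E. \<forall>(k, l) \<in> E. cE (i, j) = cE (k, l) \<longrightarrow> Lam $$ (i, j) = Lam $$ (k, l)) \<and>
      inverts_mat (1\<^sub>m p - Lam) B \<and> inverts_mat B (1\<^sub>m p - Lam)}"

definition vanishing_ideal :: "nat \<Rightarrow> (nat \<times> nat) set \<Rightarrow> (nat \<Rightarrow> 'c) \<Rightarrow> (nat \<times> nat \<Rightarrow> 'c) \<Rightarrow> mpoly set" where
  "vanishing_ideal p E cV cE =
     {f \<in> sym_ring p. \<forall>S \<in> model p E cV cE. eval_poly S f = 0}"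

definition ideal_gen :: "nat \<Rightarrow> mpoly set \<Rightarrow> mpoly set" where
  "ideal_gen p A = {f. \<exists>F h. finite F \<and> F \<subseteq> A \<and> (\<forall>g \<in> F. h g \<in> sym_ring p) \<and>
                          f = (\<Sum>g \<in> F. h g * g)}"

definition colon :: "nat \<Rightarrow> mpoly set \<Rightarrow> mpoly set \<Rightarrow> mpoly set" where
  "colon p J S = {f \<in> sym_ring p. \<exists>s \<in> S. f * s \<in> J}"

definition gens :: "nat \<Rightarrow> (nat \<times> nat) set \<Rightarrow> (nat \<Rightarrow> 'c) \<Rightarrow> (nat \<times> nat \<Rightarrow> 'c) \<Rightarrow> mpoly set" where
  "gens p E cV cE =
     {cminor i j (pa E j) | i j. i < j \<and> j < p \<and> (i, j) \<notin> E}
   \<union> {pminor (insert i (pa E i)) * pminor (pa E j) - pminor (insert j (pa E j)) * pminor (pa E i)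
        | i j. i < p \<and> j < p \<and> cV i = cV j}
   \<union> {cminor i j (pa E j - {i}) * pminor (pa E l) - cminor k l (pa E l - {k}) * pminor (pa E j)
        | i j k l. (i, j) \<in> E \<and> (k, l) \<in> E \<and> cE (i, j) = cE (k, l)}"

definition I_Gc :: "nat \<Rightarrow> (nat \<times> nat) set \<Rightarrow> (nat \<Rightarrow> 'c) \<Rightarrow> (nat \<times> nat \<Rightarrow> 'c) \<Rightarrow> mpoly set" where
  "I_Gc p E cV cE = ideal_gen p (gens p E cV cE)"

definition S_G :: "nat \<Rightarrow> (nat \<times> nat) set \<Rightarrow> mpoly set" where
  "S_G p E = {\<Prod>i \<in> {0..<p}. pminor (pa E i) ^ k i | k. True}"

end

theory Submission
  imports Defs
begin


section \<open>Evaluation homomorphism\<close>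

definition monv :: "((nat \<times> nat) \<Rightarrow> 'a::comm_ring_1) \<Rightarrow> ((nat \<times> nat) \<Rightarrow>\<^sub>0 nat) \<Rightarrow> 'a" where
  "monv x m = (\<Prod>v\<in>Poly_Mapping.keys m. x v ^ Poly_Mapping.lookup m v)"

definition ev :: "(real \<Rightarrow> 'a::comm_ring_1) \<Rightarrow> ((nat \<times> nat) \<Rightarrow> 'a) \<Rightarrow> mpoly \<Rightarrow> 'a" where
  "ev h x f = (\<Sum>m\<in>Poly_Mapping.keys f. h (Poly_Mapping.lookup f m) * monv x m)"

lemma monv_superset:
  assumes "finite K" "Poly_Mapping.keys m \<subseteq> K"
  shows "monv x m = (\<Prod>v\<in>K. x v ^ Poly_Mapping.lookup m v)"
  unfolding monv_def
  by (rule prod.mono_neutral_left[OF assms(1) assms(2)]) (auto simp: in_keys_iff)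

lemma monv_zero[simp]: "monv x 0 = 1"
  by (simp add: monv_def)

lemma monv_add: "monv x (m + n) = monv x m * monv x n"
proof -
  let ?K = "Poly_Mapping.keys m \<union> Poly_Mapping.keys n"
  have "monv x (m + n) = (\<Prod>v\<in>?K. x v ^ Poly_Mapping.lookup (m+n) v)"
    by (rule monv_superset) (use keys_add[of m n] in auto)
  also have "\<dots> = (\<Prod>v\<in>?K. x v ^ Poly_Mapping.lookup m v) * (\<Prod>v\<in>?K. x v ^ Poly_Mapping.lookup n v)"
    by (simp add: lookup_add power_add prod.distrib)
  also have "\<dots> = monv x m * monv x n"
    by (subst (1 2) monv_superset[of ?K]) auto
  finally show ?thesis .
qed

lemma ev_superset:
  assumes "h 0 = 0" "finite M" "Poly_Mapping.keys f \<subseteq> M"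
  shows "ev h x f = (\<Sum>m\<in>M. h (Poly_Mapping.lookup f m) * monv x m)"
  unfolding ev_def
  by (rule sum.mono_neutral_left[OF assms(2) assms(3)]) (auto simp: in_keys_iff assms(1))

lemma ev_add:
  assumes "h 0 = 0" "\<And>a b. h (a + b) = h a + h b"
  shows "ev h x (f + g) = ev h x f + ev h x g"
proof -
  let ?M = "Poly_Mapping.keys f \<union> Poly_Mapping.keys g"
  have "ev h x (f + g) = (\<Sum>m\<in>?M. h (Poly_Mapping.lookup (f+g) m) * monv x m)"
    by (rule ev_superset) (use assms keys_add[of f g] in auto)
  also have "\<dots> = (\<Sum>m\<in>?M. h (Poly_Mapping.lookup f m) * monv x m) + (\<Sum>m\<in>?M. h (Poly_Mapping.lookup g m) * monv x m)"
    by (simp add: lookup_add assms(2) distrib_right sum.distrib)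
  also have "\<dots> = ev h x f + ev h x g"
    by (subst (1 2) ev_superset[of h ?M]) (use assms in auto)
  finally show ?thesis .
qed

lemma ev_single:
  assumes "h 0 = 0"
  shows "ev h x (Poly_Mapping.single m c) = h c * monv x m"
  using assms by (cases "c = 0") (auto simp: ev_def)

lemma ev_zero[simp]: "ev h x 0 = 0"
  by (simp add: ev_def)

lemma poly_sum_singles:
  "f = (\<Sum>m\<in>Poly_Mapping.keys f. Poly_Mapping.single m (Poly_Mapping.lookup f m))"
proof (rule poly_mapping_eqI)
  fix k
  show "Poly_Mapping.lookup f k = Poly_Mapping.lookup (\<Sum>m\<in>Poly_Mapping.keys f. Poly_Mapping.single m (Poly_Mapping.lookup f m)) k"
    by (auto simp: lookup_sum lookup_single when_def in_keys_iff sum.delta')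
qed

lemma ev_sum:
  assumes "h 0 = 0" "\<And>a b. h (a + b) = h a + h b"
  shows "ev h x (sum F A) = (\<Sum>a\<in>A. ev h x (F a))"
  by (induction A rule: infinite_finite_induct) (auto simp: ev_add[OF assms])

lemma ev_mult:
  assumes "comm_ring_hom h"
  shows "ev h x (f * g) = ev h x f * ev h x g"
proof -
  interpret comm_ring_hom h by fact
  have h0: "h 0 = 0" and ha: "\<And>a b. h (a + b) = h a + h b" by (auto simp: hom_add)
  let ?S = "\<lambda>f. (\<Sum>m\<in>Poly_Mapping.keys f. Poly_Mapping.single m (Poly_Mapping.lookup f m))"
  have "f * g = ?S f * ?S g" by (subst (1) poly_sum_singles, subst (2) poly_sum_singles) (rule refl)
  also have "\<dots> = (\<Sum>n\<in>Poly_Mapping.keys g. \<Sum>m\<in>Poly_Mapping.keys f.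
      Poly_Mapping.single (m + n) (Poly_Mapping.lookup f m * Poly_Mapping.lookup g n))"
    by (simp add: sum_distrib_left sum_distrib_right mult_single)
  finally have fg: "f * g = \<dots>" .
  have "ev h x (f * g) = (\<Sum>n\<in>Poly_Mapping.keys g. \<Sum>m\<in>Poly_Mapping.keys f.
      h (Poly_Mapping.lookup f m) * monv x m * (h (Poly_Mapping.lookup g n) * monv x n))"
    unfolding fg by (simp add: ev_sum[OF h0 ha] ev_single[of h, OF h0] hom_mult monv_add ac_simps)
  also have "\<dots> = ev h x f * ev h x g"
    by (simp add: ev_def sum_distrib_left sum_distrib_right)
  finally show ?thesis .
qed

lemma ev_one:
  assumes "comm_ring_hom h"
  shows "ev h x 1 = 1"
proof -
  interpret comm_ring_hom h by fact
  have "(1::mpoly) = Poly_Mapping.single 0 1" by simp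
  then show ?thesis by (metis ev_single hom_one hom_zero monv_zero mult_1)
qed

lemma ev_hom:
  assumes "comm_ring_hom h"
  shows "comm_ring_hom (ev h x)"
proof -
  interpret comm_ring_hom h by fact
  show ?thesis
    by unfold_locales (auto simp: ev_add hom_add ev_mult[OF assms] ev_one[OF assms])
qed

lemma id_hom: "comm_ring_hom (\<lambda>c::real. c)"
  by unfold_locales auto

definition const :: "real \<Rightarrow> mpoly" where "const c = Poly_Mapping.single 0 c"

lemma const_hom: "comm_ring_hom const"
  by unfold_locales (auto simp: const_def single_add mult_single)

lemma eval_poly_ev: "eval_poly S f = ev (\<lambda>c. c) (\<lambda>v. S $$ v) f"
  unfolding eval_poly_def ev_def monv_def by simp




section \<open>Variables, identity theorem, projection\<close>

definition goodp :: "(nat \<times> nat) set \<Rightarrow> mpoly \<Rightarrow> bool" where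
  "goodp V f \<longleftrightarrow> (\<forall>m\<in>Poly_Mapping.keys f. Poly_Mapping.keys m \<subseteq> V)"

definition symV :: "nat \<Rightarrow> (nat \<times> nat) set" where
  "symV p = {v. fst v \<le> snd v \<and> snd v < p}"

lemma sym_ring_goodp: "f \<in> sym_ring p \<longleftrightarrow> goodp (symV p) f"
  unfolding sym_ring_def in_sym_ring_def goodp_def symV_def by auto

lemma goodp_zero[simp]: "goodp V 0" by (simp add: goodp_def)
lemma goodp_one[simp]: "goodp V 1" by (simp add: goodp_def)

lemma goodp_add: "goodp V f \<Longrightarrow> goodp V g \<Longrightarrow> goodp V (f + g)"
  unfolding goodp_def using keys_add[of f g] by blast

lemma goodp_uminus: "goodp V f \<Longrightarrow> goodp V (- f)"
  unfolding goodp_def by (auto simp: in_keys_iff lookup_uminus)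

lemma goodp_diff: "goodp V f \<Longrightarrow> goodp V g \<Longrightarrow> goodp V (f - g)"
  using goodp_add[OF _ goodp_uminus] by (metis diff_conv_add_uminus)

lemma goodp_mult: "goodp V f \<Longrightarrow> goodp V g \<Longrightarrow> goodp V (f * g)"
proof -
  assume f: "goodp V f" and g: "goodp V g"
  show "goodp V (f * g)" unfolding goodp_def
  proof
    fix m assume "m \<in> Poly_Mapping.keys (f * g)"
    then obtain a b where ab: "m = a + b" "a \<in> Poly_Mapping.keys f" "b \<in> Poly_Mapping.keys g"
      using keys_mult[of f g] by blast
    show "Poly_Mapping.keys m \<subseteq> V"
      using ab f g keys_add[of a b] unfolding goodp_def by blast
  qed
qed

lemma goodp_sum: "(\<And>a. a \<in> A \<Longrightarrow> goodp V (F a)) \<Longrightarrow> goodp V (sum F A)"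
  by (induction A rule: infinite_finite_induct) (auto intro: goodp_add)

lemma goodp_prod: "(\<And>a. a \<in> A \<Longrightarrow> goodp V (F a)) \<Longrightarrow> goodp V (prod F A)"
  by (induction A rule: infinite_finite_induct) (auto intro: goodp_mult)

lemma goodp_power: "goodp V f \<Longrightarrow> goodp V (f ^ n)"
  by (induction n) (auto intro: goodp_mult)

lemma goodp_const[simp]: "goodp V (const c)"
  by (simp add: goodp_def const_def)

lemma goodp_single_const[simp]: "goodp V (Poly_Mapping.single 0 c)"
  by (simp add: goodp_def)

lemma goodp_of_int: "goodp V (of_int k)"
  by (metis goodp_single_const single_of_int)

definition Xv :: "nat \<times> nat \<Rightarrow> mpoly" where
  "Xv v = Poly_Mapping.single (Poly_Mapping.single v 1) 1"

lemma goodp_Xv: "v \<in> V \<Longrightarrow> goodp V (Xv v)"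
  by (simp add: goodp_def Xv_def)

lemma sigma_Xv: "sigma a b = Xv (min a b, max a b)"
  by (simp add: sigma_def Xv_def)

lemma goodp_sigma: "a < p \<Longrightarrow> b < p \<Longrightarrow> goodp (symV p) (sigma a b)"
  by (auto simp: sigma_Xv symV_def intro!: goodp_Xv)

lemma goodp_det:
  assumes "\<And>i j. i < dim_row A \<Longrightarrow> j < dim_col A \<Longrightarrow> goodp V (A $$ (i, j))"
  shows "goodp V (det A)"
  unfolding det_def
proof (cases "dim_row A = dim_col A")
  case True
  show "goodp V (if dim_row A = dim_col A then \<Sum>p\<in>{p. p permutes {0..<dim_row A}}. signof p * (\<Prod>i = 0..<dim_row A. A $$ (i, p i)) else 0)"
    using True
  proof (simp, intro goodp_sum goodp_mult goodp_prod)
    fix p i assume p: "p \<in> {p. p permutes {0..<dim_col A}}" and i: "i \<in> {0..<dim_col A}"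
    then have "p i < dim_col A" by (auto dest: permutes_in_image)
    then show "goodp V (A $$ (i, p i))" using i True assms by auto
  next
    fix p show "goodp V (signof p)" by (simp add: sign_def goodp_uminus)
  qed
qed simp

lemma monv_cong: "(\<And>v. v \<in> Poly_Mapping.keys m \<Longrightarrow> x v = y v) \<Longrightarrow> monv x m = monv y m"
  unfolding monv_def by auto

lemma ev_vars: "goodp V f \<Longrightarrow> (\<And>v. v \<in> V \<Longrightarrow> x v = y v) \<Longrightarrow> ev h x f = ev h y f"
  unfolding ev_def goodp_def by (intro sum.cong refl arg_cong2[where f="(*)"] monv_cong) blast

lemma monv_split:
  "monv x m = x v ^ Poly_Mapping.lookup m v * monv x (Poly_Mapping.update v 0 m)"
proof -
  let ?K = "insert v (Poly_Mapping.keys m)"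
  have f: "finite ?K" by simp
  have "monv x m = (\<Prod>u\<in>?K. x u ^ Poly_Mapping.lookup m u)"
    by (rule monv_superset) auto
  also have "\<dots> = x v ^ Poly_Mapping.lookup m v * (\<Prod>u\<in>?K - {v}. x u ^ Poly_Mapping.lookup m u)"
    by (rule prod.remove) auto
  also have "(\<Prod>u\<in>?K - {v}. x u ^ Poly_Mapping.lookup m u) = (\<Prod>u\<in>?K. x u ^ Poly_Mapping.lookup (Poly_Mapping.update v 0 m) u)"
  proof -
    have "(\<Prod>u\<in>?K. x u ^ Poly_Mapping.lookup (Poly_Mapping.update v 0 m) u) =
      x v ^ Poly_Mapping.lookup (Poly_Mapping.update v 0 m) v * (\<Prod>u\<in>?K - {v}. x u ^ Poly_Mapping.lookup (Poly_Mapping.update v 0 m) u)"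
      by (rule prod.remove) auto
    also have "\<dots> = (\<Prod>u\<in>?K - {v}. x u ^ Poly_Mapping.lookup m u)"
      by (simp add: lookup_update, rule prod.cong[OF refl], auto)
    finally show ?thesis by simp
  qed
  also have "\<dots> = monv x (Poly_Mapping.update v 0 m)"
    by (rule monv_superset[symmetric]) (auto simp: keys_update)
  finally show ?thesis .
qed

lemma ev_id_single_zero: "ev (\<lambda>c. c) x (Poly_Mapping.single 0 c) = c"
  by (simp add: ev_single)

lemma identity_theorem:
  assumes "finite V" "goodp V f" "\<And>v. infinite (A v)"
    and "\<And>x. (\<And>v. v \<in> V \<Longrightarrow> x v \<in> A v) \<Longrightarrow> ev (\<lambda>c. c) x f = (0::real)"
  shows "f = 0"
  using assms(1,2,4)
proof (induction V arbitrary: f rule: finite_induct)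
  case empty
  then have k: "Poly_Mapping.keys f \<subseteq> {0}" unfolding goodp_def by auto
  have "ev (\<lambda>c. c) (\<lambda>_. 0) f = Poly_Mapping.lookup f 0"
    by (subst ev_superset[of _ "{0}"]) (use k in auto)
  then have "Poly_Mapping.lookup f 0 = 0" using empty by simp
  show ?case
  proof (rule poly_mapping_eqI)
    fix m show "Poly_Mapping.lookup f m = Poly_Mapping.lookup 0 m"
    proof (cases "m = 0")
      case False then have "m \<notin> Poly_Mapping.keys f" using k by auto
      then show ?thesis by (simp add: not_in_keys_iff_lookup_eq_zero)
    qed (use \<open>Poly_Mapping.lookup f 0 = 0\<close> in simp)
  qed
next
  case (insert v V f)
  define fk where "fk k = (\<Sum>m\<in>{m \<in> Poly_Mapping.keys f. Poly_Mapping.lookup m v = k}.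
      Poly_Mapping.single (Poly_Mapping.update v 0 m) (Poly_Mapping.lookup f m))" for k
  have gfk: "goodp V (fk k)" for k
    unfolding fk_def
  proof (rule goodp_sum)
    fix m assume "m \<in> {m \<in> Poly_Mapping.keys f. Poly_Mapping.lookup m v = k}"
    then have "Poly_Mapping.keys m \<subseteq> insert v V" using insert.prems(1) unfolding goodp_def by auto
    then show "goodp V (Poly_Mapping.single (Poly_Mapping.update v 0 m) (Poly_Mapping.lookup f m))"
      by (auto simp: goodp_def keys_update)
  qed
  have evfk: "ev (\<lambda>c. c) x (fk k) = (\<Sum>m\<in>{m \<in> Poly_Mapping.keys f. Poly_Mapping.lookup m v = k}.
      Poly_Mapping.lookup f m * monv x (Poly_Mapping.update v 0 m))" for x k
    unfolding fk_def by (simp add: ev_sum ev_single)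
  let ?T = "(\<lambda>m. Poly_Mapping.lookup m v) ` Poly_Mapping.keys f"
  have evf: "ev (\<lambda>c. c) x f = (\<Sum>k\<in>?T. x v ^ k * ev (\<lambda>c. c) x (fk k))" for x
  proof -
    have "ev (\<lambda>c. c) x f = (\<Sum>m\<in>Poly_Mapping.keys f. Poly_Mapping.lookup f m * (x v ^ Poly_Mapping.lookup m v * monv x (Poly_Mapping.update v 0 m)))"
      unfolding ev_def by (subst monv_split[of x _ v]) simp
    also have "\<dots> = (\<Sum>k\<in>?T. \<Sum>m\<in>{m \<in> Poly_Mapping.keys f. Poly_Mapping.lookup m v = k}.
        Poly_Mapping.lookup f m * (x v ^ Poly_Mapping.lookup m v * monv x (Poly_Mapping.update v 0 m)))"
      by (rule sum.group[symmetric]) auto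
    also have "\<dots> = (\<Sum>k\<in>?T. x v ^ k * ev (\<lambda>c. c) x (fk k))"
      unfolding evfk sum_distrib_left by (intro sum.cong refl) (auto simp: ac_simps)
    finally show ?thesis .
  qed
  have fk0: "fk k = 0" for k
  proof (rule insert.IH[OF gfk])
    fix x :: "nat \<times> nat \<Rightarrow> real" assume xA: "\<And>u. u \<in> V \<Longrightarrow> x u \<in> A u"
    define q where "q = (\<Sum>k\<in>?T. monom (ev (\<lambda>c. c) x (fk k)) k)"
    have "poly q t = 0" if t: "t \<in> A v" for t
    proof -
      have "poly q t = (\<Sum>k\<in>?T. t ^ k * ev (\<lambda>c. c) x (fk k))"
        unfolding q_def poly_sum poly_monom by (simp add: ac_simps)
      also have "\<dots> = (\<Sum>k\<in>?T. (x(v := t)) v ^ k * ev (\<lambda>c. c) (x(v := t)) (fk k))"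
        by (intro sum.cong refl arg_cong2[where f="(*)"]) (simp, rule ev_vars[OF gfk], use insert.hyps in auto)
      also have "\<dots> = ev (\<lambda>c. c) (x(v := t)) f" by (rule evf[symmetric])
      also have "\<dots> = 0" by (rule insert.prems(2)) (use xA t in auto)
      finally show ?thesis .
    qed
    then have "A v \<subseteq> {t. poly q t = 0}" by auto
    then have "q = 0" using poly_roots_finite[of q] assms(3)[of v] finite_subset by blast
    then have "coeff q k = 0" by simp
    moreover have "coeff q k = (if k \<in> ?T then ev (\<lambda>c. c) x (fk k) else 0)"
      unfolding q_def coeff_sum by (simp add: sum.delta)
    moreover have "k \<notin> ?T \<Longrightarrow> fk k = 0"
      unfolding fk_def by (auto intro!: sum.neutral)
    ultimately show "ev (\<lambda>c. c) x (fk k) = 0" by (cases "k \<in> ?T") auto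
  qed
  have "Poly_Mapping.lookup f m = 0" for m
  proof (rule ccontr)
    assume nz: "Poly_Mapping.lookup f m \<noteq> 0"
    have "Poly_Mapping.lookup (fk (Poly_Mapping.lookup m v)) (Poly_Mapping.update v 0 m)
      = (\<Sum>m'\<in>{m' \<in> Poly_Mapping.keys f. Poly_Mapping.lookup m' v = Poly_Mapping.lookup m v}.
          (if m' = m then Poly_Mapping.lookup f m' else 0))"
      unfolding fk_def lookup_sum
    proof (intro sum.cong refl)
      fix m' assume m': "m' \<in> {m' \<in> Poly_Mapping.keys f. Poly_Mapping.lookup m' v = Poly_Mapping.lookup m v}"
      have "Poly_Mapping.update v 0 m' = Poly_Mapping.update v 0 m \<longleftrightarrow> m' = m"
      proof
        assume e: "Poly_Mapping.update v 0 m' = Poly_Mapping.update v 0 m"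
        show "m' = m"
        proof (rule poly_mapping_eqI)
          fix u show "Poly_Mapping.lookup m' u = Poly_Mapping.lookup m u"
            using m' arg_cong[OF e, of "\<lambda>g. Poly_Mapping.lookup g u"] by (auto simp: lookup_update split: if_splits)
        qed
      qed simp
      then show "Poly_Mapping.lookup (Poly_Mapping.single (Poly_Mapping.update v 0 m') (Poly_Mapping.lookup f m')) (Poly_Mapping.update v 0 m)
          = (if m' = m then Poly_Mapping.lookup f m' else 0)"
        by (auto simp: lookup_single when_def)
    qed
    also have "\<dots> = Poly_Mapping.lookup f m"
      using nz by (simp add: sum.delta' in_keys_iff)
    finally show False using fk0 nz by simp
  qed
  then show ?case by (intro poly_mapping_eqI) simp
qed




lemma Xv_pow: "Xv v ^ n = Poly_Mapping.single (Poly_Mapping.single v n) 1"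
proof (induction n)
  case (Suc n)
  have "Xv v ^ Suc n = Xv v * Xv v ^ n" by simp
  also have "\<dots> = Poly_Mapping.single (Poly_Mapping.single v 1 + Poly_Mapping.single v n) 1"
    unfolding Suc.IH by (simp only: Xv_def mult_single) simp
  also have "\<dots> = Poly_Mapping.single (Poly_Mapping.single v (Suc n)) 1"
    by (simp add: single_add[symmetric])
  finally show ?case .
qed simp

lemma prod_single1: "finite K \<Longrightarrow> (\<Prod>v\<in>K. Poly_Mapping.single (g v) (1::real)) = Poly_Mapping.single (\<Sum>v\<in>K. g v) 1"
  by (induction K rule: finite_induct) (auto simp: mult_single)

lemma monv_Xv: "monv Xv m = Poly_Mapping.single m 1"
proof -
  have "monv Xv m = (\<Prod>v\<in>Poly_Mapping.keys m. Poly_Mapping.single (Poly_Mapping.single v (Poly_Mapping.lookup m v)) 1)"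
    unfolding monv_def Xv_pow ..
  also have "\<dots> = Poly_Mapping.single (\<Sum>v\<in>Poly_Mapping.keys m. Poly_Mapping.single v (Poly_Mapping.lookup m v)) 1"
    by (rule prod_single1) simp
  also have "\<dots> = Poly_Mapping.single m 1"
    by (subst (2) poly_sum_singles) (rule refl)
  finally show ?thesis .
qed

lemma ev_const_Xv: "ev const Xv f = f"
proof -
  have "ev const Xv f = (\<Sum>m\<in>Poly_Mapping.keys f. Poly_Mapping.single m (Poly_Mapping.lookup f m))"
    unfolding ev_def monv_Xv const_def by (simp add: mult_single)
  also have "\<dots> = f" by (rule poly_sum_singles[symmetric])
  finally show ?thesis .
qed

definition prj :: "(nat \<times> nat) set \<Rightarrow> mpoly \<Rightarrow> mpoly" where
  "prj V = ev const (\<lambda>v. if v \<in> V then Xv v else 0)"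

lemma prj_hom: "comm_ring_hom (prj V)"
  unfolding prj_def by (rule ev_hom[OF const_hom])

lemma prj_id: "goodp V f \<Longrightarrow> prj V f = f"
  unfolding prj_def by (subst ev_vars[of V f _ Xv]) (auto simp: ev_const_Xv)

lemma prj_good: "goodp V (prj V f)"
  unfolding prj_def ev_def
proof (rule goodp_sum, rule goodp_mult)
  fix m assume m: "m \<in> Poly_Mapping.keys f"
  show "goodp V (monv (\<lambda>v. if v \<in> V then Xv v else 0) m)"
  proof (cases "Poly_Mapping.keys m \<subseteq> V")
    case True
    then have "monv (\<lambda>v. if v \<in> V then Xv v else 0) m = monv Xv m" by (intro monv_cong) auto
    then show ?thesis using True by (simp add: monv_Xv goodp_def)
  next
    case False
    then obtain v where v: "v \<in> Poly_Mapping.keys m" "v \<notin> V" by auto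
    have "monv (\<lambda>v. if v \<in> V then Xv v else 0) m = 0"
      unfolding monv_def
      apply (rule prod_zero, simp)
      apply (rule bexI[of _ v])
      using v by (auto simp: in_keys_iff zero_power)
    then show ?thesis by simp
  qed
qed (simp add: const_def)

inductive_set Ideal :: "mpoly set \<Rightarrow> mpoly set" for G where
  I0: "0 \<in> Ideal G"
| Igen: "g \<in> G \<Longrightarrow> g \<in> Ideal G"
| Iadd: "a \<in> Ideal G \<Longrightarrow> b \<in> Ideal G \<Longrightarrow> a + b \<in> Ideal G"
| Imul: "a \<in> Ideal G \<Longrightarrow> r * a \<in> Ideal G"

lemma Imul_right: "a \<in> Ideal G \<Longrightarrow> a * r \<in> Ideal G"
  by (metis Imul mult.commute)

lemma Iuminus: "a \<in> Ideal G \<Longrightarrow> - a \<in> Ideal G"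
  using Imul[of a G "-1"] by simp

lemma Idiff: "a \<in> Ideal G \<Longrightarrow> b \<in> Ideal G \<Longrightarrow> a - b \<in> Ideal G"
  by (metis Iadd Iuminus diff_conv_add_uminus)

lemma Isum: "(\<And>x. x \<in> A \<Longrightarrow> F x \<in> Ideal G) \<Longrightarrow> sum F A \<in> Ideal G"
  by (induction A rule: infinite_finite_induct) (auto intro: I0 Iadd)

lemma Ideal_repr:
  assumes "x \<in> Ideal G"
  shows "\<exists>F h. finite F \<and> F \<subseteq> G \<and> x = (\<Sum>g\<in>F. h g * g)"
  using assms
proof induction
  case I0 then show ?case by (intro exI[of _ "{}"]) auto
next
  case (Igen g) then show ?case by (intro exI[of _ "{g}"] exI[of _ "\<lambda>_. 1"]) auto
next
  case (Iadd a b)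
  then obtain F1 h1 F2 h2 where 1: "finite F1" "F1 \<subseteq> G" "a = (\<Sum>g\<in>F1. h1 g * g)"
    and 2: "finite F2" "F2 \<subseteq> G" "b = (\<Sum>g\<in>F2. h2 g * g)" by blast
  let ?h = "\<lambda>g. (if g \<in> F1 then h1 g else 0) + (if g \<in> F2 then h2 g else 0)"
  have "(\<Sum>g\<in>F1 \<union> F2. ?h g * g) = (\<Sum>g\<in>F1 \<union> F2. (if g \<in> F1 then h1 g * g else 0)) + (\<Sum>g\<in>F1 \<union> F2. (if g \<in> F2 then h2 g * g else 0))"
  proof -
    have "?h g * g = (if g \<in> F1 then h1 g * g else 0) + (if g \<in> F2 then h2 g * g else 0)" for g
      by (auto simp: distrib_right)
    then show ?thesis by (simp add: sum.distrib)
  qed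
  also have "\<dots> = a + b"
    using 1 2 by (simp add: sum.If_cases Int_absorb1 Int_absorb2)
  finally show ?case using 1 2 by (intro exI[of _ "F1 \<union> F2"] exI[of _ ?h]) auto
next
  case (Imul a r)
  then obtain F h where "finite F" "F \<subseteq> G" "a = (\<Sum>g\<in>F. h g * g)" by blast
  then show ?case by (intro exI[of _ F] exI[of _ "\<lambda>g. r * h g"]) (auto simp: sum_distrib_left ac_simps)
qed

lemma Ideal_to_ideal_gen:
  assumes "x \<in> Ideal G" "G \<subseteq> sym_ring p" "x \<in> sym_ring p"
  shows "x \<in> ideal_gen p G"
proof -
  interpret comm_ring_hom "prj (symV p)" by (rule prj_hom)
  obtain F h where F: "finite F" "F \<subseteq> G" "x = (\<Sum>g\<in>F. h g * g)" using Ideal_repr[OF assms(1)] by blast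
  have "x = prj (symV p) x" using assms(3) by (simp add: sym_ring_goodp prj_id)
  also have "\<dots> = (\<Sum>g\<in>F. prj (symV p) (h g) * g)"
    unfolding F(3) hom_sum hom_mult
    using F(2) assms(2) by (intro sum.cong refl) (auto simp: sym_ring_goodp prj_id)
  finally show ?thesis unfolding ideal_gen_def
    using F prj_good by (intro CollectI exI[of _ F] exI[of _ "\<lambda>g. prj (symV p) (h g)"]) (auto simp: sym_ring_goodp)
qed

section \<open>Congruence modulo a localised ideal\<close>

locale mclosed =
  fixes S :: "mpoly set" and G :: "mpoly set"
  assumes one_S: "1 \<in> S" and mult_S: "s \<in> S \<Longrightarrow> t \<in> S \<Longrightarrow> s * t \<in> S"
begin

definition cg :: "mpoly \<Rightarrow> mpoly \<Rightarrow> bool" where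
  "cg a b \<longleftrightarrow> (\<exists>s\<in>S. s * (a - b) \<in> Ideal G)"

lemma cg_refl[simp]: "cg a a"
  unfolding cg_def using one_S I0 by auto

lemma cg_ideal: "a - b \<in> Ideal G \<Longrightarrow> cg a b"
  unfolding cg_def using one_S by force

lemma cg_sym: "cg a b \<Longrightarrow> cg b a"
  unfolding cg_def by (metis Iuminus minus_diff_eq mult_minus_right)

lemma cg_trans: "cg a b \<Longrightarrow> cg b c \<Longrightarrow> cg a c"
proof -
  assume "cg a b" "cg b c"
  then obtain s t where st: "s \<in> S" "t \<in> S" "s * (a - b) \<in> Ideal G" "t * (b - c) \<in> Ideal G"
    unfolding cg_def by blast
  have "(s * t) * (a - c) = t * (s * (a - b)) + s * (t * (b - c))" by (simp add: algebra_simps)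
  then show "cg a c" unfolding cg_def using st mult_S by (metis Iadd Imul)
qed

lemma cg_add: "cg a b \<Longrightarrow> cg c d \<Longrightarrow> cg (a + c) (b + d)"
proof -
  assume "cg a b" "cg c d"
  then obtain s t where st: "s \<in> S" "t \<in> S" "s * (a - b) \<in> Ideal G" "t * (c - d) \<in> Ideal G"
    unfolding cg_def by blast
  have "(s * t) * ((a + c) - (b + d)) = t * (s * (a - b)) + s * (t * (c - d))" by (simp add: algebra_simps)
  then show ?thesis unfolding cg_def using st mult_S by (metis Iadd Imul)
qed

lemma cg_mult_left: "cg a b \<Longrightarrow> cg (c * a) (c * b)"
  unfolding cg_def by (metis Imul mult.left_commute right_diff_distrib)

lemma cg_mult: "cg a b \<Longrightarrow> cg c d \<Longrightarrow> cg (a * c) (b * d)"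
proof -
  assume ab: "cg a b" and cd: "cg c d"
  have "cg (a * c) (b * c)" using cg_mult_left[OF ab, of c] by (simp add: ac_simps)
  moreover have "cg (b * c) (b * d)" using cg_mult_left[OF cd, of b] .
  ultimately show ?thesis by (rule cg_trans)
qed

lemma cg_uminus: "cg a b \<Longrightarrow> cg (- a) (- b)"
  using cg_mult_left[of a b "-1"] by simp

lemma cg_diff: "cg a b \<Longrightarrow> cg c d \<Longrightarrow> cg (a - c) (b - d)"
  using cg_add[OF _ cg_uminus] by (metis diff_conv_add_uminus)

lemma cg_sum: "(\<And>x. x \<in> A \<Longrightarrow> cg (F x) (H x)) \<Longrightarrow> cg (sum F A) (sum H A)"
  by (induction A rule: infinite_finite_induct) (auto intro: cg_add)

lemma cg_prod: "(\<And>x. x \<in> A \<Longrightarrow> cg (F x) (H x)) \<Longrightarrow> cg (prod F A) (prod H A)"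
  by (induction A rule: infinite_finite_induct) (auto intro: cg_mult)

lemma cg_power: "cg a b \<Longrightarrow> cg (a ^ n) (b ^ n)"
  by (induction n) (auto intro: cg_mult)

lemma cg_eq_trans: "a = b \<Longrightarrow> cg b c \<Longrightarrow> cg a c" by simp

lemma cg_cancel: "s \<in> S \<Longrightarrow> cg (s * a) (s * b) \<Longrightarrow> cg a b"
  unfolding cg_def by (metis mult.assoc mult_S right_diff_distrib)

end




section \<open>Determinant identities for symbolic submatrices\<close>

definition subm :: "(nat \<Rightarrow> nat \<Rightarrow> 'a) \<Rightarrow> nat list \<Rightarrow> nat list \<Rightarrow> 'a mat" where
  "subm M rs cs = mat (length rs) (length cs) (\<lambda>(a, b). M (rs ! a) (cs ! b))"

lemma subm_carrier[simp]: "subm M rs cs \<in> carrier_mat (length rs) (length cs)"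
  by (simp add: subm_def)

lemma subm_dims[simp]: "dim_row (subm M rs cs) = length rs" "dim_col (subm M rs cs) = length cs"
  by (simp_all add: subm_def)

lemma subm_index[simp]: "a < length rs \<Longrightarrow> b < length cs \<Longrightarrow> subm M rs cs $$ (a, b) = M (rs ! a) (cs ! b)"
  by (simp add: subm_def)

lemma map_subm: "map_mat h (subm M rs cs) = subm (\<lambda>a b. h (M a b)) rs cs"
  by (rule eq_matI) auto

definition dl :: "nat \<Rightarrow> 'b list \<Rightarrow> 'b list" where
  "dl t ks = take t ks @ drop (Suc t) ks"

lemma dl_length: "t < length ks \<Longrightarrow> length (dl t ks) = length ks - 1"
  by (simp add: dl_def)

lemma dl_nth: "t < length ks \<Longrightarrow> c < length ks - 1 \<Longrightarrow> dl t ks ! c = (if c < t then ks ! c else ks ! Suc c)"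
  by (auto simp: dl_def nth_append)

lemma subm_row_front:
  assumes t: "t < length ks"
  shows "subm M (ks ! t # dl t ks) cs = swap_row_to_front (subm M ks cs) t"
  apply (subst swap_row_to_front_result[OF subm_carrier t])
  apply (rule eq_matI)
  using t by (auto simp: dl_length subm_def dl_nth)

lemma det_subm_row_front:
  assumes t: "t < length ks" and l: "length cs = length ks"
  shows "det (subm M (ks ! t # dl t ks) cs) = (-1) ^ t * det (subm M ks cs)"
proof -
  have "subm M ks cs \<in> carrier_mat (length ks) (length ks)" using l subm_carrier[of M ks cs] by simp
  then show ?thesis unfolding subm_row_front[OF t] using swap_row_to_front_det t by blast
qed

lemma L1_list:
  fixes M :: "nat \<Rightarrow> nat \<Rightarrow> 'a::comm_ring_1"
  shows "det (subm M (i # ks) (j # ks)) = M i j * det (subm M ks ks)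
    - (\<Sum>t<length ks. M i (ks ! t) * det (subm M (ks ! t # dl t ks) (j # dl t ks)))"
proof -
  let ?n = "length ks"
  let ?A = "subm M (i # ks) (j # ks)"
  have A: "?A \<in> carrier_mat (Suc ?n) (Suc ?n)" using subm_carrier[of M "i # ks" "j # ks"] by simp
  have "det ?A = (\<Sum>c<Suc ?n. ?A $$ (0, c) * cofactor ?A 0 c)"
    by (rule laplace_expansion_row[OF A]) simp
  also have "\<dots> = ?A $$ (0, 0) * cofactor ?A 0 0 + (\<Sum>t<?n. ?A $$ (0, Suc t) * cofactor ?A 0 (Suc t))"
    by (rule sum.lessThan_Suc_shift)
  also have "?A $$ (0, 0) * cofactor ?A 0 0 = M i j * det (subm M ks ks)"
  proof -
    have "mat_delete ?A 0 0 = subm M ks ks" by (rule eq_matI) (auto simp: mat_delete_def)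
    then show ?thesis by (simp add: cofactor_def)
  qed
  also have "(\<Sum>t<?n. ?A $$ (0, Suc t) * cofactor ?A 0 (Suc t)) =
     (\<Sum>t<?n. - (M i (ks ! t) * det (subm M (ks ! t # dl t ks) (j # dl t ks))))"
  proof (rule sum.cong[OF refl])
    fix t assume "t \<in> {..<?n}"
    then have t: "t < ?n" by simp
    have md: "mat_delete ?A 0 (Suc t) = subm M ks (j # dl t ks)"
      by (rule eq_matI) (insert t, auto simp: mat_delete_def dl_length dl_nth nth_Cons')
    have l: "length (j # dl t ks) = length ks" using t by (simp add: dl_length)
    have "cofactor ?A 0 (Suc t) = (-1) ^ Suc t * det (subm M ks (j # dl t ks))"
      by (simp add: cofactor_def md)
    also have "det (subm M ks (j # dl t ks)) = (-1) ^ t * det (subm M (ks ! t # dl t ks) (j # dl t ks))"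
      using det_subm_row_front[OF t l, of M] by (simp add: power_mult_distrib[symmetric] mult.assoc[symmetric] power_add[symmetric])
    finally have "cofactor ?A 0 (Suc t) = - det (subm M (ks ! t # dl t ks) (j # dl t ks))"
      by (simp add: power_add[symmetric] mult.assoc[symmetric])
    then show "?A $$ (0, Suc t) * cofactor ?A 0 (Suc t) = - (M i (ks ! t) * det (subm M (ks ! t # dl t ks) (j # dl t ks)))"
      using t by simp
  qed
  finally show ?thesis by (simp add: sum_negf)
qed


lemma subm_row_front_last:
  "subm M (m # ks) cs = swap_row_to_front (subm M (ks @ [m]) cs) (length ks)"
  apply (subst swap_row_to_front_result[OF subm_carrier])
   apply simp
  apply (rule eq_matI)
  by (auto simp: subm_def nth_append)

lemma subm_col_front_last:
  "subm M rs (m # ks) = swap_col_to_front (subm M rs (ks @ [m])) (length ks)"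
  apply (subst swap_col_to_front_result[OF subm_carrier])
   apply simp
  apply (rule eq_matI)
  by (auto simp: subm_def nth_append)

lemma L2_list:
  fixes M :: "nat \<Rightarrow> nat \<Rightarrow> 'a::comm_ring_1"
  shows "det (subm M (ks @ [m]) (ks @ [m])) = det (subm M (m # ks) (m # ks))"
proof -
  let ?n = "length ks"
  have c1: "subm M (ks @ [m]) (ks @ [m]) \<in> carrier_mat (Suc ?n) (Suc ?n)"
    using subm_carrier[of M "ks @ [m]" "ks @ [m]"] by simp
  have c2: "subm M (m # ks) (ks @ [m]) \<in> carrier_mat (Suc ?n) (Suc ?n)"
    using subm_carrier[of M "m # ks" "ks @ [m]"] by simp
  have "det (subm M (m # ks) (m # ks)) = (-1) ^ ?n * det (subm M (m # ks) (ks @ [m]))"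
    unfolding subm_col_front_last[of M "m # ks"] by (rule swap_col_to_front_det[OF c2]) simp
  also have "det (subm M (m # ks) (ks @ [m])) = (-1) ^ ?n * det (subm M (ks @ [m]) (ks @ [m]))"
    unfolding subm_row_front_last[of M m ks] by (rule swap_row_to_front_det[OF c1]) simp
  finally show ?thesis by (simp add: mult.assoc[symmetric] power_add[symmetric])
qed

lemma det_subm_dup:
  fixes M :: "nat \<Rightarrow> nat \<Rightarrow> 'a::comm_ring_1"
  assumes "i \<in> set ks" "length cs = Suc (length ks)"
  shows "det (subm M (i # ks) cs) = 0"
proof -
  obtain t where t: "t < length ks" "ks ! t = i" using assms(1) by (auto simp: in_set_conv_nth)
  have c: "subm M (i # ks) cs \<in> carrier_mat (Suc (length ks)) (Suc (length ks))"
    using subm_carrier[of M "i # ks" cs] assms(2) by simp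
  show ?thesis
    by (rule det_identical_rows[OF c, of 0 "Suc t"]) (use t assms(2) in \<open>auto intro!: eq_vecI\<close>)
qed

lemma remove1_nth: "distinct xs \<Longrightarrow> t < length xs \<Longrightarrow> remove1 (xs ! t) xs = dl t xs"
proof (induction xs arbitrary: t)
  case (Cons x xs)
  show ?case
  proof (cases t)
    case 0 then show ?thesis by (simp add: dl_def)
  next
    case (Suc t')
    then have "xs ! t' \<noteq> x" using Cons.prems by (auto simp: nth_mem)
    then show ?thesis using Cons Suc by (auto simp: dl_def)
  qed
qed simp

definition pmin :: "(nat \<Rightarrow> nat \<Rightarrow> 'a::comm_ring_1) \<Rightarrow> nat set \<Rightarrow> 'a" where
  "pmin M K = det (subm M (sorted_list_of_set K) (sorted_list_of_set K))"

definition cmin :: "(nat \<Rightarrow> nat \<Rightarrow> 'a::comm_ring_1) \<Rightarrow> nat \<Rightarrow> nat \<Rightarrow> nat set \<Rightarrow> 'a" where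
  "cmin M i j K = det (subm M (i # sorted_list_of_set K) (j # sorted_list_of_set K))"

lemma pminor_pmin: "pminor K = pmin sigma K"
  unfolding pminor_def pmin_def submat_sym_def subm_def ..

lemma cminor_cmin: "cminor i j K = cmin sigma i j K"
  unfolding cminor_def cmin_def submat_sym_def subm_def ..

lemma hom_pmin: "comm_ring_hom h \<Longrightarrow> h (pmin M K) = pmin (\<lambda>a b. h (M a b)) K"
  unfolding pmin_def by (simp add: comm_ring_hom.hom_det[of h, symmetric] map_subm)

lemma hom_cmin: "comm_ring_hom h \<Longrightarrow> h (cmin M i j K) = cmin (\<lambda>a b. h (M a b)) i j K"
  unfolding cmin_def by (simp add: comm_ring_hom.hom_det[of h, symmetric] map_subm)

lemma pmin_empty[simp]: "pmin M {} = 1"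
  unfolding pmin_def by (simp add: subm_def)

lemma L1_set:
  fixes M :: "nat \<Rightarrow> nat \<Rightarrow> 'a::comm_ring_1"
  assumes K: "finite K"
  shows "cmin M i j K = M i j * pmin M K - (\<Sum>k\<in>K. M i k * cmin M k j (K - {k}))"
proof -
  let ?ks = "sorted_list_of_set K"
  have d: "distinct ?ks" by simp
  have "(\<Sum>t<length ?ks. M i (?ks ! t) * det (subm M (?ks ! t # dl t ?ks) (j # dl t ?ks)))
      = (\<Sum>t<length ?ks. (\<lambda>k. M i k * cmin M k j (K - {k})) (?ks ! t))"
  proof (rule sum.cong[OF refl])
    fix t assume "t \<in> {..<length ?ks}"
    then have t: "t < length ?ks" by simp
    have "sorted_list_of_set (K - {?ks ! t}) = dl t ?ks"
      using sorted_list_of_set_remove[OF K] remove1_nth[OF d t] by simp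
    then show "M i (?ks ! t) * det (subm M (?ks ! t # dl t ?ks) (j # dl t ?ks)) =
      (\<lambda>k. M i k * cmin M k j (K - {k})) (?ks ! t)" unfolding cmin_def by simp
  qed
  also have "\<dots> = (\<Sum>k\<in>K. M i k * cmin M k j (K - {k}))"
    by (rule sum.reindex_bij_betw[OF bij_betw_nth[OF d refl]]) (simp add: K)
  finally have calc: "(\<Sum>t<length ?ks. M i (?ks ! t) * det (subm M (?ks ! t # dl t ?ks) (j # dl t ?ks)))
      = (\<Sum>k\<in>K. M i k * cmin M k j (K - {k}))" .
  have L: "cmin M i j K = M i j * pmin M K - (\<Sum>t<length ?ks. M i (?ks ! t) * det (subm M (?ks ! t # dl t ?ks) (j # dl t ?ks)))"
    unfolding cmin_def pmin_def by (rule L1_list)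
  show ?thesis unfolding L calc ..
qed

lemma sl_insert_max:
  assumes "finite K" "\<forall>k\<in>K. k < m"
  shows "sorted_list_of_set (insert m K) = sorted_list_of_set K @ [m]"
proof -
  have "m \<notin> K" using assms by auto
  then have "sorted_list_of_set (insert m K) = insort m (sorted_list_of_set K)"
    using assms(1) by (simp add: sorted_list_of_set_insert)
  also have "\<dots> = sorted_list_of_set K @ [m]"
    by (rule sorted_insort_is_snoc) (use assms in \<open>auto simp: less_imp_le\<close>)
  finally show ?thesis .
qed

lemma L2_set:
  fixes M :: "nat \<Rightarrow> nat \<Rightarrow> 'a::comm_ring_1"
  assumes "finite K" "\<forall>k\<in>K. k < m"
  shows "pmin M (insert m K) = cmin M m m K"
  unfolding pmin_def cmin_def sl_insert_max[OF assms] by (rule L2_list)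

lemma cmin_dup:
  fixes M :: "nat \<Rightarrow> nat \<Rightarrow> 'a::comm_ring_1"
  assumes "finite K" "i \<in> K"
  shows "cmin M i j K = 0"
  unfolding cmin_def by (rule det_subm_dup) (use assms in auto)




section \<open>Matrices as functions\<close>

definition mm :: "nat \<Rightarrow> (nat \<Rightarrow> nat \<Rightarrow> 'a::comm_ring_1) \<Rightarrow> (nat \<Rightarrow> nat \<Rightarrow> 'a) \<Rightarrow> nat \<Rightarrow> nat \<Rightarrow> 'a" where
  "mm p A B i j = (\<Sum>k<p. A i k * B k j)"

definition idm :: "nat \<Rightarrow> nat \<Rightarrow> 'a::comm_ring_1" where
  "idm i j = (if i = j then 1 else 0)"

definition tr :: "(nat \<Rightarrow> nat \<Rightarrow> 'a) \<Rightarrow> nat \<Rightarrow> nat \<Rightarrow> 'a" where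
  "tr A i j = A j i"

fun mpow :: "nat \<Rightarrow> (nat \<Rightarrow> nat \<Rightarrow> 'a::comm_ring_1) \<Rightarrow> nat \<Rightarrow> nat \<Rightarrow> nat \<Rightarrow> 'a" where
  "mpow p A 0 = idm"
| "mpow p A (Suc n) = mm p A (mpow p A n)"

lemma mm_assoc: "mm p (mm p A B) C = mm p A (mm p B C)"
  unfolding mm_def
  by (intro ext) (simp add: sum_distrib_left sum_distrib_right mult.assoc, rule sum.swap)

lemma tr_mm: "tr (mm p A B) = mm p (tr B) (tr A)"
  unfolding mm_def tr_def by (intro ext) (simp add: mult.commute)

lemma tr_tr[simp]: "tr (tr A) = A"
  unfolding tr_def by simp

lemma mm_idm_left: "i < p \<Longrightarrow> mm p idm A i j = A i j"
proof -
  assume i: "i < p"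
  have "mm p idm A i j = (\<Sum>k<p. if k = i then A i j else 0)"
    unfolding mm_def idm_def by (rule sum.cong) auto
  then show ?thesis using i by simp
qed

lemma mm_idm_right: "j < p \<Longrightarrow> mm p A idm i j = A i j"
proof -
  assume j: "j < p"
  have "mm p A idm i j = (\<Sum>k<p. if k = j then A i j else 0)"
    unfolding mm_def idm_def by (rule sum.cong) auto
  then show ?thesis using j by simp
qed

lemma mpow_zero_below:
  assumes su: "\<And>i j. j \<le> i \<Longrightarrow> A i j = 0"
  shows "i < p \<Longrightarrow> j < p \<Longrightarrow> j < i + n \<or> (n = 0 \<and> j \<noteq> i) \<Longrightarrow> mpow p A n i j = 0"
proof (induction n arbitrary: i j)
  case 0 then show ?case by (auto simp: idm_def)
next
  case (Suc n)
  have "mpow p A (Suc n) i j = (\<Sum>k<p. A i k * mpow p A n k j)" by (simp add: mm_def)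
  also have "\<dots> = 0"
  proof (rule sum.neutral, rule ballI)
    fix k assume k: "k \<in> {..<p}"
    show "A i k * mpow p A n k j = 0"
    proof (cases "k \<le> i")
      case True then show ?thesis using su by simp
    next
      case False
      then have "j < k + n \<or> (n = 0 \<and> j \<noteq> k)" using Suc.prems by auto
      then show ?thesis using Suc.IH[of k j] k Suc.prems by auto
    qed
  qed
  finally show ?case .
qed

lemma mpow_nilpotent:
  assumes su: "\<And>i j. j \<le> i \<Longrightarrow> A i j = 0"
  shows "i < p \<Longrightarrow> j < p \<Longrightarrow> mpow p A p i j = 0"
  by (rule mpow_zero_below[OF su]) auto

definition neuinv :: "nat \<Rightarrow> 'a::comm_ring_1 \<Rightarrow> (nat \<Rightarrow> nat \<Rightarrow> 'a) \<Rightarrow> nat \<Rightarrow> nat \<Rightarrow> 'a" where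
  "neuinv p c A i j = (\<Sum>k<p. c ^ (p - Suc k) * mpow p A k i j)"

lemma neuinv_right:
  assumes su: "\<And>i j. j \<le> i \<Longrightarrow> A i j = 0" and ij: "i < p" "j < p"
  shows "mm p (\<lambda>i j. c * idm i j - A i j) (neuinv p c A) i j = c ^ p * idm i j"
proof -
  let ?f = "\<lambda>k. c ^ (p - k) * mpow p A k i j"
  have "mm p (\<lambda>i j. c * idm i j - A i j) (neuinv p c A) i j
      = c * mm p idm (neuinv p c A) i j - mm p A (neuinv p c A) i j"
    unfolding mm_def by (simp add: left_diff_distrib sum_subtractf sum_distrib_left mult.assoc)
  also have "c * mm p idm (neuinv p c A) i j = (\<Sum>k<p. ?f k)"
    unfolding mm_idm_left[OF ij(1)] neuinv_def sum_distrib_left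
    by (intro sum.cong refl) (auto simp: mult.assoc[symmetric] power_Suc[symmetric] Suc_diff_Suc)
  also have "mm p A (neuinv p c A) i j = (\<Sum>k<p. ?f (Suc k))"
    unfolding mm_def neuinv_def
    by (simp add: sum_distrib_left, subst sum.swap) (simp add: mm_def sum_distrib_left ac_simps)
  also have "(\<Sum>k<p. ?f k) - (\<Sum>k<p. ?f (Suc k)) = ?f 0 - ?f p"
    by (subst sum_subtractf[symmetric], rule sum_lessThan_telescope')
  also have "\<dots> = c ^ p * idm i j" using mpow_nilpotent[OF su ij] by simp
  finally show ?thesis .
qed

section \<open>Positive definite real matrices\<close>

definition pd :: "nat \<Rightarrow> (nat \<Rightarrow> nat \<Rightarrow> real) \<Rightarrow> bool" where
  "pd p s \<longleftrightarrow> (\<forall>x. (\<exists>a<p. x a \<noteq> 0) \<longrightarrow> 0 < (\<Sum>a<p. \<Sum>b<p. x a * s a b * x b))"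

lemma pd_inj:
  assumes "pd p s" "K \<subseteq> {..<p}" "\<And>i. i \<in> K \<Longrightarrow> (\<Sum>k\<in>K. s i k * z k) = 0" "k0 \<in> K"
  shows "z k0 = 0"
proof (rule ccontr)
  assume nz: "z k0 \<noteq> 0"
  define x where "x a = (if a \<in> K then z a else 0)" for a
  have fK: "finite K" using assms(2) finite_subset by blast
  have ex: "\<exists>a<p. x a \<noteq> 0" using nz assms(2,4) unfolding x_def by auto
  have "0 < (\<Sum>a<p. \<Sum>b<p. x a * s a b * x b)"
    using assms(1) ex unfolding pd_def by blast
  also have "(\<Sum>a<p. \<Sum>b<p. x a * s a b * x b) = (\<Sum>a<p. x a * (\<Sum>b\<in>K. s a b * z b))"
  proof (rule sum.cong[OF refl])
    fix a
    have "(\<Sum>b<p. x a * s a b * x b) = (\<Sum>b\<in>K. x a * s a b * x b)"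
      by (rule sum.mono_neutral_right) (use assms(2) in \<open>auto simp: x_def\<close>)
    also have "\<dots> = (\<Sum>b\<in>K. x a * (s a b * z b))"
      by (rule sum.cong[OF refl]) (simp add: x_def)
    also have "\<dots> = x a * (\<Sum>b\<in>K. s a b * z b)"
      by (simp only: sum_distrib_left)
    finally show "(\<Sum>b<p. x a * s a b * x b) = x a * (\<Sum>b\<in>K. s a b * z b)" .
  qed
  also have "\<dots> = 0" using assms(3) by (intro sum.neutral) (auto simp: x_def)
  finally show False by simp
qed

lemma pd_minor_pos:
  assumes pd: "pd p s" and K: "K \<subseteq> {..<p}"
  shows "0 < pmin s K"
  using K
proof (induction "card K" arbitrary: K rule: less_induct)
  case less
  have fK: "finite K" using less.prems finite_subset by blast
  show ?case
  proof (cases "K = {}")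
    case True then show ?thesis by simp
  next
    case False
    define m where "m = Max K"
    define K' where "K' = K - {m}"
    have mK: "m \<in> K" using False fK m_def by simp
    have K'lt: "\<forall>k\<in>K'. k < m"
    proof
      fix k assume "k \<in> K'"
      then have k: "k \<in> K" "k \<noteq> m" by (auto simp: K'_def)
      have "k \<le> m" using Max_ge[OF fK k(1)] m_def by simp
      then show "k < m" using k(2) by simp
    qed
    have KK': "K = insert m K'" using mK K'_def by auto
    have fK': "finite K'" using fK K'_def by simp
    have cK': "card K' < card K" unfolding K'_def by (rule card_Diff1_less[OF fK mK])
    have K'p: "K' \<subseteq> {..<p}" using less.prems K'_def by auto
    have mp: "m < p" using mK less.prems by auto
    have mK': "m \<notin> K'" using K'_def by simp
    define d where "d = pmin s K'"
    have dpos: "0 < d" unfolding d_def by (rule less.hyps[OF cK' K'p])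
    define n where "n k = cmin s k m (K' - {k})" for k
    define u where "u k = n k / d" for k
    have L: "pmin s K = s m m * d - (\<Sum>k\<in>K'. s m k * n k)"
      unfolding KK' L2_set[OF fK' K'lt] L1_set[OF fK'] d_def n_def ..
    have Li: "s i m * d = (\<Sum>k\<in>K'. s i k * n k)" if i: "i \<in> K'" for i
      using L1_set[OF fK', of s i m] cmin_dup[OF fK' i, of s m] unfolding d_def n_def by simp
    have su: "(\<Sum>k\<in>K'. s i k * u k) = (\<Sum>k\<in>K'. s i k * n k) / d" for i
      unfolding u_def by (simp add: sum_divide_distrib)
    define x where "x a = (if a = m then 1 else if a \<in> K' then - u a else 0)" for a
    define y where "y a = (\<Sum>b<p. s a b * x b)" for a
    have y: "y a = s a m - (\<Sum>k\<in>K'. s a k * u k)" for a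
    proof -
      have "y a = (\<Sum>b\<in>insert m K'. s a b * x b)"
        unfolding y_def
        by (rule sum.mono_neutral_right) (use less.prems KK' in \<open>auto simp: x_def\<close>)
      also have "\<dots> = s a m * x m + (\<Sum>b\<in>K'. s a b * x b)"
        using fK' mK' by simp
      also have "(\<Sum>b\<in>K'. s a b * x b) = (\<Sum>k\<in>K'. - (s a k * u k))"
        by (rule sum.cong[OF refl]) (use mK' in \<open>auto simp: x_def\<close>)
      also have "\<dots> = - (\<Sum>k\<in>K'. s a k * u k)" by (simp add: sum_negf)
      finally show ?thesis by (simp add: x_def)
    qed
    have y0: "y i = 0" if i: "i \<in> K'" for i
    proof -
      have "(\<Sum>k\<in>K'. s i k * u k) = s i m"
        unfolding su Li[OF i, symmetric] using dpos by simp
      then show ?thesis using y by simp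
    qed
    have ex: "\<exists>a<p. x a \<noteq> 0" using mp by (intro exI[of _ m]) (simp add: x_def)
    have "0 < (\<Sum>a<p. \<Sum>b<p. x a * s a b * x b)"
      using pd ex unfolding pd_def by blast
    also have "(\<Sum>a<p. \<Sum>b<p. x a * s a b * x b) = (\<Sum>a<p. x a * y a)"
      unfolding y_def by (simp add: sum_distrib_left mult.assoc)
    also have "\<dots> = (\<Sum>a\<in>insert m K'. x a * y a)"
      by (rule sum.mono_neutral_right) (use less.prems KK' in \<open>auto simp: x_def\<close>)
    also have "\<dots> = x m * y m + (\<Sum>a\<in>K'. x a * y a)"
      using fK' mK' by simp
    also have "(\<Sum>a\<in>K'. x a * y a) = 0" using y0 by simp
    finally have ym: "0 < y m" by (simp add: x_def)
    have "pmin s K = d * y m"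
      unfolding L y su using dpos by (simp add: right_diff_distrib mult.commute)
    then show ?thesis using dpos ym by simp
  qed
qed




context mclosed
begin

lemma cg_mm:
  assumes "\<And>k. k < p \<Longrightarrow> cg (A i k) (A' i k)" "\<And>k. k < p \<Longrightarrow> cg (B k j) (B' k j)"
  shows "cg (mm p A B i j) (mm p A' B' i j)"
  unfolding mm_def using assms by (intro cg_sum cg_mult) auto

lemma cg_mpow:
  assumes "\<And>i j. cg (A i j) (A' i j)"
  shows "cg (mpow p A n i j) (mpow p A' n i j)"
  by (induction n arbitrary: i j) (auto intro!: cg_mm assms)

lemma cg_neuinv:
  assumes "\<And>i j. cg (A i j) (A' i j)"
  shows "cg (neuinv p c A i j) (neuinv p c A' i j)"
  unfolding neuinv_def by (intro cg_sum cg_mult cg_refl cg_mpow assms)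

end

lemma mm_cong:
  assumes "\<And>k. k < p \<Longrightarrow> A i k = A' i k" "\<And>k. k < p \<Longrightarrow> B k j = B' k j"
  shows "mm p A B i j = mm p A' B' i j"
  unfolding mm_def using assms by (intro sum.cong) auto

lemma sigma_sym: "sigma a b = sigma b a"
  unfolding sigma_def by (simp add: min.commute max.commute)

locale cdag =
  fixes p :: nat and E :: "(nat \<times> nat) set" and cV :: "nat \<Rightarrow> 'c" and cE :: "nat \<times> nat \<Rightarrow> 'c"
  assumes dag: "dag p E"
begin

lemma edge: "(i, j) \<in> E \<Longrightarrow> i < j \<and> j < p"
  using dag unfolding dag_def by auto

lemma pa_sub: "pa E j \<subseteq> {..<j}"
  using edge unfolding pa_def by auto

lemma pa_finite[simp]: "finite (pa E j)"
  using pa_sub finite_subset by blast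

definition "Dj j = pminor (pa E j)"
definition "Dall = (\<Prod>t\<in>{0..<p}. Dj t)"
definition "Qj j = (\<Prod>t\<in>{0..<p} - {j}. Dj t)"
definition "Nn k j = cminor k j (pa E j - {k})"
definition "Ww j = pminor (insert j (pa E j))"
definition "Am k j = (if (k, j) \<in> E then Nn k j * Qj j else 0)"
definition "wv j = Ww j * Qj j"
definition "Xs i j = sigma i j"
definition "Tm i j = Dall * idm i j - Am i j"
definition "repE e = (SOME e'. e' \<in> E \<and> cE e' = cE e)"
definition "repV j = (SOME i. i < p \<and> cV i = cV j)"
definition "Ah k j = (if (k, j) \<in> E then Am (fst (repE (k, j))) (snd (repE (k, j))) else 0)"
definition "wh j = wv (repV j)"
definition "Cm = neuinv p Dall Am"
definition "Ch = neuinv p Dall Ah"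
definition "Pm i j = Dall * (\<Sum>k<p. Ch k i * wh k * Ch k j)"

lemma Dall_split: "j < p \<Longrightarrow> Dall = Dj j * Qj j"
  unfolding Dall_def Qj_def by (rule prod.remove) auto

lemma S_one: "1 \<in> S_G p E"
  unfolding S_G_def by (rule CollectI, rule exI[of _ "\<lambda>_. 0"]) simp

lemma S_mult: "s \<in> S_G p E \<Longrightarrow> t \<in> S_G p E \<Longrightarrow> s * t \<in> S_G p E"
  unfolding S_G_def
proof (clarify)
  fix k1 k2 :: "nat \<Rightarrow> nat"
  show "\<exists>k. (\<Prod>i = 0..<p. pminor (pa E i) ^ k1 i) * (\<Prod>i = 0..<p. pminor (pa E i) ^ k2 i) = (\<Prod>i = 0..<p. pminor (pa E i) ^ k i) \<and> True"
    by (rule exI[of _ "\<lambda>i. k1 i + k2 i"]) (simp add: power_add prod.distrib)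
qed

lemma Dall_S: "Dall \<in> S_G p E"
  unfolding S_G_def Dall_def Dj_def by (rule CollectI, rule exI[of _ "\<lambda>_. 1"]) simp

sublocale mclosed "S_G p E" "gens p E cV cE"
  by unfold_locales (auto intro: S_one S_mult)

lemma Am_su: "j \<le> i \<Longrightarrow> Am i j = 0"
  unfolding Am_def using edge by fastforce

lemma Ah_su: "j \<le> i \<Longrightarrow> Ah i j = 0"
  unfolding Ah_def using edge by fastforce

lemma L1_sigma: "cminor i j K = sigma i j * pminor K - (\<Sum>k\<in>K. sigma i k * cminor k j (K - {k}))"
  if "finite K" for K
  unfolding cminor_cmin pminor_pmin by (rule L1_set[OF that])

lemma Mm_eq:
  assumes j: "j < p"
  shows "mm p Xs Tm i j = Qj j * cminor i j (pa E j)"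
proof -
  have "mm p Xs Tm i j = Dall * mm p Xs idm i j - mm p Xs Am i j"
    unfolding mm_def Tm_def by (simp add: right_diff_distrib sum_subtractf sum_distrib_left ac_simps)
  also have "mm p Xs idm i j = Xs i j" by (rule mm_idm_right[OF j])
  also have "mm p Xs Am i j = (\<Sum>k\<in>pa E j. Xs i k * Am k j)"
    unfolding mm_def
  proof (rule sum.mono_neutral_right)
    show "pa E j \<subseteq> {..<p}" using pa_sub j by fastforce
  qed (auto simp: Am_def pa_def)
  also have "\<dots> = Qj j * (\<Sum>k\<in>pa E j. sigma i k * cminor k j (pa E j - {k}))"
    unfolding sum_distrib_left
    by (rule sum.cong[OF refl]) (auto simp: Am_def pa_def Nn_def Xs_def)
  also have "Dall * Xs i j - \<dots> = Qj j * cminor i j (pa E j)"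
    unfolding L1_sigma[OF pa_finite] Dall_split[OF j] Xs_def Dj_def by (simp add: algebra_simps)
  finally show ?thesis .
qed

lemma gen_nonedge: "i < j \<Longrightarrow> j < p \<Longrightarrow> (i, j) \<notin> E \<Longrightarrow> cminor i j (pa E j) \<in> gens p E cV cE"
  unfolding gens_def by blast

lemma cminor_jj: "cminor j j (pa E j) = Ww j"
  unfolding Ww_def cminor_cmin pminor_pmin
  by (rule L2_set[symmetric]) (use pa_sub in auto)

definition "Lm i j = (if i < j then 0 else Qj j * cminor i j (pa E j))"

lemma cg_M_L:
  assumes "i < p" "j < p"
  shows "cg (mm p Xs Tm i j) (Lm i j)"
proof (cases "i < j")
  case True
  show ?thesis
  proof (cases "(i, j) \<in> E")
    case True
    then have "i \<in> pa E j" by (simp add: pa_def)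
    then have "cminor i j (pa E j) = 0" unfolding cminor_cmin by (rule cmin_dup[OF pa_finite])
    then show ?thesis using \<open>i < j\<close> by (simp add: Mm_eq[OF assms(2)] Lm_def)
  next
    case False
    then have "cminor i j (pa E j) \<in> Ideal (gens p E cV cE)"
      using gen_nonedge \<open>i < j\<close> assms by (blast intro: Igen)
    then have "Qj j * cminor i j (pa E j) - 0 \<in> Ideal (gens p E cV cE)" by (simp add: Imul)
    then show ?thesis using \<open>i < j\<close> by (simp add: Mm_eq[OF assms(2)] Lm_def cg_ideal)
  qed
qed (simp add: Mm_eq[OF assms(2)] Lm_def)

lemma tr_Xs: "tr Xs = Xs"
  unfolding tr_def Xs_def by (intro ext) (rule sigma_sym)

definition "Yv = mm p (tr Tm) (mm p Xs Tm)"

lemma Yv_sym: "Yv i j = Yv j i"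
proof -
  have "tr Yv = Yv"
    unfolding Yv_def tr_mm tr_tr tr_Xs mm_assoc ..
  then have "tr Yv i j = Yv i j" by simp
  then show ?thesis unfolding tr_def by simp
qed

lemma Tm_low: "i < k \<Longrightarrow> Tm k i = 0"
  unfolding Tm_def idm_def using Am_su[of i k] by simp

lemma R_upper:
  assumes "i < j"
  shows "mm p (tr Tm) Lm i j = 0"
  unfolding mm_def tr_def
proof (rule sum.neutral, rule ballI)
  fix k
  show "Tm k i * Lm k j = 0"
    by (cases "i < k") (use assms in \<open>auto simp: Tm_low Lm_def\<close>)
qed

lemma R_diag:
  assumes "j < p"
  shows "mm p (tr Tm) Lm j j = Dall * wv j"
proof -
  have "mm p (tr Tm) Lm j j = (\<Sum>k<p. if k = j then Tm j j * Lm j j else 0)"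
    unfolding mm_def tr_def
  proof (rule sum.cong[OF refl])
    fix k
    show "Tm k j * Lm k j = (if k = j then Tm j j * Lm j j else 0)"
      by (cases "j < k"; cases "k < j") (auto simp: Tm_low Lm_def)
  qed
  also have "\<dots> = Tm j j * Lm j j" using assms by simp
  also have "\<dots> = Dall * wv j"
    by (simp add: Tm_def Lm_def idm_def Am_su cminor_jj wv_def)
  finally show ?thesis .
qed

definition "Dg i j = (if i = j then Dall * wv i else 0)"

lemma cg_Y_R: "i < p \<Longrightarrow> j < p \<Longrightarrow> cg (Yv i j) (mm p (tr Tm) Lm i j)"
  unfolding Yv_def by (rule cg_mm) (auto intro: cg_M_L)

lemma cg_Y_Dg:
  assumes "i < p" "j < p"
  shows "cg (Yv i j) (Dg i j)"
proof -
  consider "i < j" | "i = j" | "j < i" by linarith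
  then show ?thesis
  proof cases
    case 1 then show ?thesis using cg_Y_R[OF assms] R_upper[OF 1] by (simp add: Dg_def)
  next
    case 2 then show ?thesis using cg_Y_R[OF assms] R_diag assms by (simp add: Dg_def)
  next
    case 3 then show ?thesis using cg_Y_R[OF assms(2,1)] R_upper[OF 3] Yv_sym[of i j] by (simp add: Dg_def)
  qed
qed

lemma TC: "i < p \<Longrightarrow> j < p \<Longrightarrow> mm p Tm Cm i j = Dall ^ p * idm i j"
  unfolding Tm_def Cm_def by (rule neuinv_right) (auto intro: Am_su)

lemma mm_scal_idm_right: "j < p \<Longrightarrow> mm p A (\<lambda>k l. c * idm k l) i j = c * A i j"
proof -
  assume j: "j < p"
  have "mm p A (\<lambda>k l. c * idm k l) i j = (\<Sum>k<p. if k = j then c * A i j else 0)"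
    unfolding mm_def idm_def by (rule sum.cong) auto
  then show ?thesis using j by simp
qed

lemma mm_scal_idm_left: "i < p \<Longrightarrow> mm p (\<lambda>k l. c * idm k l) A i j = c * A i j"
proof -
  assume i: "i < p"
  have "mm p (\<lambda>k l. c * idm k l) A i j = (\<Sum>k<p. if k = i then c * A i j else 0)"
    unfolding mm_def idm_def by (rule sum.cong) auto
  then show ?thesis using i by simp
qed

lemma tr_scal_idm: "tr (\<lambda>k l. c * idm k l) = (\<lambda>k l. c * idm k l)"
  unfolding tr_def idm_def by (intro ext) auto

lemma Z_eq:
  assumes ij: "i < p" "j < p"
  shows "mm p (tr Cm) (mm p Yv Cm) i j = Dall ^ (2 * p) * Xs i j"
proof -
  let ?U = "mm p Tm Cm"
  let ?V = "\<lambda>k l. Dall ^ p * idm k l :: mpoly"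
  have e: "mm p (tr Cm) (mm p Yv Cm) = mm p (tr ?U) (mm p Xs ?U)"
    unfolding Yv_def tr_mm mm_assoc ..
  have "mm p (tr Cm) (mm p Yv Cm) i j = mm p (tr ?U) (mm p Xs ?U) i j"
    unfolding e ..
  also have "mm p (tr ?U) (mm p Xs ?U) i j = mm p (tr ?V) (mm p Xs ?V) i j"
  proof (rule mm_cong)
    fix k assume k: "k < p"
    show "tr ?U i k = tr ?V i k" unfolding tr_def using TC[OF k ij(1)] .
    show "mm p Xs ?U k j = mm p Xs ?V k j"
      by (rule mm_cong) (use TC ij in auto)
  qed
  also have "\<dots> = mm p ?V (mm p Xs ?V) i j" unfolding tr_scal_idm ..
  also have "\<dots> = Dall ^ p * mm p Xs ?V i j" by (rule mm_scal_idm_left[OF ij(1)])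
  also have "mm p Xs ?V i j = Dall ^ p * Xs i j" by (rule mm_scal_idm_right[OF ij(2)])
  finally have "mm p (tr Cm) (mm p Yv Cm) i j = Dall ^ p * (Dall ^ p * Xs i j)" .
  moreover have "Dall ^ (2 * p) = Dall ^ p * Dall ^ p" by (simp add: mult_2 power_add)
  ultimately show ?thesis by (simp only: mult.assoc)
qed

lemma cg_Z:
  assumes ij: "i < p" "j < p"
  shows "cg (mm p (tr Cm) (mm p Yv Cm) i j) (Dall * (\<Sum>k<p. Cm k i * wv k * Cm k j))"
proof -
  have 1: "cg (mm p (tr Cm) (mm p Yv Cm) i j) (mm p (tr Cm) (mm p Dg Cm) i j)"
    by (intro cg_mm cg_refl) (auto intro: cg_Y_Dg ij)
  have dg: "mm p Dg Cm k j = Dall * wv k * Cm k j" if k: "k < p" for k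
  proof -
    have "mm p Dg Cm k j = (\<Sum>l<p. if l = k then Dall * wv k * Cm k j else 0)"
      unfolding mm_def Dg_def by (rule sum.cong) auto
    then show ?thesis using k by simp
  qed
  have "mm p (tr Cm) (mm p Dg Cm) i j = (\<Sum>k<p. Cm k i * (Dall * wv k * Cm k j))"
    unfolding mm_def[of p "tr Cm"] tr_def by (rule sum.cong[OF refl]) (simp add: dg)
  also have "\<dots> = Dall * (\<Sum>k<p. Cm k i * wv k * Cm k j)"
    unfolding sum_distrib_left by (rule sum.cong[OF refl]) (simp only: mult_ac)
  finally have 2: "mm p (tr Cm) (mm p Dg Cm) i j = Dall * (\<Sum>k<p. Cm k i * wv k * Cm k j)" .
  show ?thesis using 1 unfolding 2 .
qed

lemma repE: "e \<in> E \<Longrightarrow> repE e \<in> E \<and> cE (repE e) = cE e"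
  unfolding repE_def by (rule someI_ex) blast

lemma repV: "j < p \<Longrightarrow> repV j < p \<and> cV (repV j) = cV j"
  unfolding repV_def by (rule someI_ex) blast

lemma cg_Am_Ah: "cg (Am k j) (Ah k j)"
proof (cases "(k, j) \<in> E")
  case False then show ?thesis by (simp add: Am_def Ah_def)
next
  case True
  obtain k' l where r: "repE (k, j) = (k', l)" by fastforce
  have kl: "(k', l) \<in> E" "cE (k', l) = cE (k, j)" using repE[OF True] r by auto
  have jp: "j < p" and lp: "l < p" using edge[OF True] edge[OF kl(1)] by auto
  define g where "g = Nn k j * Dj l - Nn k' l * Dj j"
  have "g \<in> gens p E cV cE"
    unfolding gens_def g_def Nn_def Dj_def
    by (intro UnI2 CollectI exI[of _ k] exI[of _ j] exI[of _ k'] exI[of _ l]) (use True kl in auto)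
  then have gI: "(Qj j * Qj l) * g \<in> Ideal (gens p E cV cE)" by (intro Imul Igen)
  have Ah: "Ah k j = Nn k' l * Qj l" using True kl(1) by (simp add: Ah_def r Am_def)
  have "Dall * (Am k j - Ah k j) = Dall * (Nn k j * Qj j) - Dall * (Nn k' l * Qj l)"
    using True by (simp add: Am_def Ah right_diff_distrib)
  also have "\<dots> = (Dj l * Qj l) * (Nn k j * Qj j) - (Dj j * Qj j) * (Nn k' l * Qj l)"
    using Dall_split[OF jp] Dall_split[OF lp] by metis
  also have "\<dots> = (Qj j * Qj l) * g" unfolding g_def by (simp add: algebra_simps)
  finally have "Dall * (Am k j - Ah k j) \<in> Ideal (gens p E cV cE)" using gI by simp
  then show ?thesis unfolding cg_def using Dall_S by blast
qed

lemma cg_wv_wh: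
  assumes jp: "j < p"
  shows "cg (wv j) (wh j)"
proof -
  define i where "i = repV j"
  have ip: "i < p" and c: "cV i = cV j" using repV[OF jp] i_def by auto
  define g where "g = Ww j * Dj i - Ww i * Dj j"
  have "g \<in> gens p E cV cE"
    unfolding gens_def g_def Ww_def Dj_def
    by (intro UnI1 UnI2 CollectI exI[of _ j] exI[of _ i]) (use ip jp c in auto)
  then have gI: "(Qj j * Qj i) * g \<in> Ideal (gens p E cV cE)" by (intro Imul Igen)
  have "Dall * (wv j - wh j) = Dall * (Ww j * Qj j) - Dall * (Ww i * Qj i)"
    by (simp add: wh_def wv_def i_def right_diff_distrib)
  also have "\<dots> = (Dj i * Qj i) * (Ww j * Qj j) - (Dj j * Qj j) * (Ww i * Qj i)"
    using Dall_split[OF jp] Dall_split[OF ip] by metis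
  also have "\<dots> = (Qj j * Qj i) * g" unfolding g_def by (simp add: algebra_simps)
  finally have "Dall * (wv j - wh j) \<in> Ideal (gens p E cV cE)" using gI by simp
  then show ?thesis unfolding cg_def using Dall_S by blast
qed

lemma cg_Cm_Ch: "cg (Cm i j) (Ch i j)"
  unfolding Cm_def Ch_def by (rule cg_neuinv) (rule cg_Am_Ah)

lemma cg_main:
  assumes ij: "i < p" "j < p"
  shows "cg (Dall ^ (2 * p) * sigma i j) (Pm i j)"
proof -
  have 1: "cg (Dall ^ (2 * p) * sigma i j) (Dall * (\<Sum>k<p. Cm k i * wv k * Cm k j))"
    using cg_Z[OF ij] Z_eq[OF ij] by (simp add: Xs_def)
  have 2: "cg (Dall * (\<Sum>k<p. Cm k i * wv k * Cm k j)) (Pm i j)"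
    unfolding Pm_def by (intro cg_mult cg_refl cg_sum) (auto intro: cg_Cm_Ch cg_wv_wh)
  show ?thesis by (rule cg_trans[OF 1 2])
qed

end




section \<open>Evaluation at real matrices\<close>

definition evS :: "(nat \<Rightarrow> nat \<Rightarrow> real) \<Rightarrow> mpoly \<Rightarrow> real" where
  "evS s = ev (\<lambda>c. c) (\<lambda>v. s (fst v) (snd v))"

definition symf :: "(nat \<Rightarrow> nat \<Rightarrow> real) \<Rightarrow> bool" where
  "symf s \<longleftrightarrow> (\<forall>a b. s a b = s b a)"

definition sfun :: "real mat \<Rightarrow> nat \<Rightarrow> nat \<Rightarrow> real" where
  "sfun S a b = S $$ (min a b, max a b)"

lemma symf_sfun: "symf (sfun S)"
  unfolding symf_def sfun_def by (simp add: min.commute max.commute)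

lemma evS_hom: "comm_ring_hom (evS s)"
  unfolding evS_def by (rule ev_hom[OF id_hom])

lemma monv_single1: "monv x (Poly_Mapping.single v 1) = x v"
  unfolding monv_def by simp

lemma monv_single_Suc0: "monv x (Poly_Mapping.single v (Suc 0)) = x v"
  using monv_single1[of x v] by simp

lemma evS_sigma: "symf s \<Longrightarrow> evS s (sigma a b) = s a b"
  unfolding evS_def sigma_def symf_def
  by (cases "a \<le> b") (auto simp: ev_single monv_single_Suc0 min_def max_def)

lemma evS_fun: "symf s \<Longrightarrow> (\<lambda>a b. evS s (sigma a b)) = s"
  by (intro ext) (simp add: evS_sigma)

lemma evS_pminor: "symf s \<Longrightarrow> evS s (pminor K) = pmin s K"
  unfolding pminor_pmin hom_pmin[OF evS_hom] evS_fun by simp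

lemma evS_cminor: "symf s \<Longrightarrow> evS s (cminor i j K) = cmin s i j K"
  unfolding cminor_cmin hom_cmin[OF evS_hom] evS_fun by simp

lemma eval_poly_evS: "goodp (symV p) f \<Longrightarrow> eval_poly S f = evS (sfun S) f"
  unfolding eval_poly_ev evS_def
  by (rule ev_vars[of "symV p"]) (auto simp: symV_def sfun_def min_def max_def)

lemma mult_mat_mm:
  assumes "A \<in> carrier_mat p p" "C \<in> carrier_mat p p" "i < p" "j < p"
  shows "(A * C) $$ (i, j) = mm p (\<lambda>a b. A $$ (a, b)) (\<lambda>a b. C $$ (a, b)) i j"
  using assms by (simp add: mm_def scalar_prod_def atLeast0LessThan)

lemma neuinv_diag1:
  assumes su: "\<And>i j. j \<le> i \<Longrightarrow> A i j = 0" and i: "i < p"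
  shows "neuinv p (1::'a::comm_ring_1) A i i = 1"
proof -
  have "neuinv p 1 A i i = (\<Sum>k<p. if k = 0 then 1 else 0)"
    unfolding neuinv_def
  proof (rule sum.cong[OF refl])
    fix k assume k: "k \<in> {..<p}"
    show "1 ^ (p - Suc k) * mpow p A k i i = (if k = 0 then 1 else (0::'a))"
    proof (cases k)
      case 0 then show ?thesis by (simp add: idm_def)
    next
      case (Suc k')
      have "mpow p A k i i = 0" by (rule mpow_zero_below[OF su]) (use i Suc in auto)
      then show ?thesis using Suc by simp
    qed
  qed
  also have "\<dots> = 1" using i by simp
  finally show ?thesis .
qed

lemma neuinv_low:
  assumes su: "\<And>i j. j \<le> i \<Longrightarrow> A i j = 0" and ij: "i < p" "j < p" "j < i"
  shows "neuinv p c A i j = 0"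
  unfolding neuinv_def
proof (rule sum.neutral, rule ballI)
  fix k assume "k \<in> {..<p}"
  have "mpow p A k i j = 0" by (rule mpow_zero_below[OF su]) (use ij in auto)
  then show "c ^ (p - Suc k) * mpow p A k i j = 0" by simp
qed

context cdag
begin

lemma model_analysis:
  assumes "S \<in> model p E cV cE"
  obtains om lam where
    "pd p (sfun S)"
    "\<And>i. i < p \<Longrightarrow> 0 < om i"
    "\<And>i k. i < p \<Longrightarrow> k < p \<Longrightarrow> cV i = cV k \<Longrightarrow> om i = om k"
    "\<And>i j k l. (i, j) \<in> E \<Longrightarrow> (k, l) \<in> E \<Longrightarrow> cE (i, j) = cE (k, l) \<Longrightarrow> lam i j = lam k l"
    "\<And>i j. i \<le> j \<Longrightarrow> j < p \<Longrightarrow> sfun S i j - (\<Sum>k\<in>pa E j. sfun S i k * lam k j) = (if i = j then om j else 0)"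
proof -
  from assms obtain B Om Lam where S: "S = transpose_mat B * Om * B" and
    Lc: "Lam \<in> carrier_mat p p" and Oc: "Om \<in> carrier_mat p p" and Bc: "B \<in> carrier_mat p p"
    and Od: "\<forall>i<p. \<forall>j<p. i \<noteq> j \<longrightarrow> Om $$ (i, j) = 0" and Op: "\<forall>i<p. Om $$ (i, i) > 0"
    and Lz: "\<forall>i<p. \<forall>j<p. (i, j) \<notin> E \<longrightarrow> Lam $$ (i, j) = 0"
    and Oeq: "\<forall>i<p. \<forall>k<p. cV i = cV k \<longrightarrow> Om $$ (i, i) = Om $$ (k, k)"
    and Leq: "\<forall>(i, j)\<in>E. \<forall>(k, l)\<in>E. cE (i, j) = cE (k, l) \<longrightarrow> Lam $$ (i, j) = Lam $$ (k, l)"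
    and inv1: "inverts_mat (1\<^sub>m p - Lam) B" and inv2: "inverts_mat B (1\<^sub>m p - Lam)"
    unfolding model_def by blast
  define om where "om i = Om $$ (i, i)" for i
  define lam where "lam i j = (if (i, j) \<in> E then Lam $$ (i, j) else 0)" for i j
  define b where "b i j = B $$ (i, j)" for i j
  have su: "\<And>i j. j \<le> i \<Longrightarrow> lam i j = 0" using edge by (fastforce simp: lam_def)
  have lamL: "Lam $$ (i, j) = lam i j" if "i < p" "j < p" for i j using Lz that by (auto simp: lam_def)
  have ILc: "1\<^sub>m p - Lam \<in> carrier_mat p p" using Lc by (simp add: minus_carrier_mat)
  have IL: "(1\<^sub>m p - Lam) $$ (i, j) = 1 * idm i j - lam i j" if "i < p" "j < p" for i j
    using that Lc lamL by (simp add: idm_def)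
  have inv1': "(1\<^sub>m p - Lam) * B = 1\<^sub>m p" using inv1 Lc unfolding inverts_mat_def by simp
  have inv2': "B * (1\<^sub>m p - Lam) = 1\<^sub>m p" using inv2 Bc unfolding inverts_mat_def by simp
  define Cn where "Cn = mat p p (\<lambda>(i, j). neuinv p (1::real) lam i j)"
  have Cnc: "Cn \<in> carrier_mat p p" unfolding Cn_def by simp
  have ILC: "(1\<^sub>m p - Lam) * Cn = 1\<^sub>m p"
  proof (rule eq_matI)
    fix i j assume ij: "i < dim_row (1\<^sub>m p :: real mat)" "j < dim_col (1\<^sub>m p :: real mat)"
    then have ij': "i < p" "j < p" by auto
    have "((1\<^sub>m p - Lam) * Cn) $$ (i, j) = mm p (\<lambda>a b. (1\<^sub>m p - Lam) $$ (a, b)) (\<lambda>a b. Cn $$ (a, b)) i j"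
      by (rule mult_mat_mm[OF ILc Cnc ij'])
    also have "\<dots> = mm p (\<lambda>a b. 1 * idm a b - lam a b) (neuinv p 1 lam) i j"
      by (rule mm_cong) (use ij' IL in \<open>auto simp: Cn_def\<close>)
    also have "\<dots> = 1 ^ p * idm i j" by (rule neuinv_right[OF su ij'])
    finally show "((1\<^sub>m p - Lam) * Cn) $$ (i, j) = 1\<^sub>m p $$ (i, j)" using ij' by (simp add: idm_def)
  qed (use Lc Cnc in auto)
  have BCn: "B = Cn"
  proof -
    have "B = B * 1\<^sub>m p" using Bc by simp
    also have "\<dots> = B * ((1\<^sub>m p - Lam) * Cn)" unfolding ILC ..
    also have "\<dots> = (B * (1\<^sub>m p - Lam)) * Cn" using Bc ILc Cnc by (simp add: assoc_mult_mat)
    also have "\<dots> = Cn" unfolding inv2' using Cnc by simp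
    finally show ?thesis .
  qed
  have bN: "b i j = neuinv p 1 lam i j" if "i < p" "j < p" for i j
    using that unfolding b_def BCn Cn_def by simp
  have bdiag: "b i i = 1" if "i < p" for i using bN[OF that that] neuinv_diag1[OF su that] by simp
  have blow: "b i j = 0" if "i < p" "j < p" "j < i" for i j using bN[OF that(1,2)] neuinv_low[OF su that] by simp
  have BOc: "transpose_mat B * Om \<in> carrier_mat p p" using Bc Oc by simp
  have BO: "(transpose_mat B * Om) $$ (i, k) = b k i * om k" if "i < p" "k < p" for i k
  proof -
    have "(transpose_mat B * Om) $$ (i, k) = (\<Sum>l<p. B $$ (l, i) * Om $$ (l, k))"
      using that Bc Oc by (simp add: scalar_prod_def atLeast0LessThan)
    also have "\<dots> = (\<Sum>l<p. if l = k then B $$ (k, i) * Om $$ (k, k) else 0)"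
      by (rule sum.cong[OF refl]) (use Od that in auto)
    also have "\<dots> = b k i * om k" using that by (simp add: b_def om_def)
    finally show ?thesis .
  qed
  have Sc: "S \<in> carrier_mat p p" unfolding S using Bc Oc by simp
  have Sent: "S $$ (i, j) = (\<Sum>k<p. b k i * om k * b k j)" if "i < p" "j < p" for i j
  proof -
    have "S $$ (i, j) = mm p (\<lambda>a b. (transpose_mat B * Om) $$ (a, b)) (\<lambda>a b. B $$ (a, b)) i j"
      unfolding S by (rule mult_mat_mm[OF BOc Bc that])
    also have "\<dots> = (\<Sum>k<p. b k i * om k * b k j)"
      unfolding mm_def by (rule sum.cong[OF refl]) (use that in \<open>simp add: BO b_def\<close>)
    finally show ?thesis .
  qed
  have Ssym: "S $$ (i, j) = S $$ (j, i)" if "i < p" "j < p" for i j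
    using Sent[OF that] Sent[OF that(2,1)] by (simp add: ac_simps)
  have sS: "sfun S i j = S $$ (i, j)" if "i < p" "j < p" for i j
    using Ssym[OF that] unfolding sfun_def by (cases "i \<le> j") (auto simp: min_def max_def)
  have sSent: "sfun S i j = (\<Sum>k<p. b k i * om k * b k j)" if "i < p" "j < p" for i j
    using sS[OF that] Sent[OF that] by simp
  have pd: "pd p (sfun S)"
    unfolding pd_def
  proof (intro allI impI)
    fix x :: "nat \<Rightarrow> real" assume "\<exists>a<p. x a \<noteq> 0"
    then obtain a where a: "a < p" "x a \<noteq> 0" by blast
    define y where "y k = (\<Sum>c<p. b k c * x c)" for k
    have inv: "(\<Sum>k<p. (1 * idm a' k - lam a' k) * b k c) = idm a' c" if "a' < p" "c < p" for a' c
    proof -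
      have "((1\<^sub>m p - Lam) * B) $$ (a', c) = mm p (\<lambda>a b. (1\<^sub>m p - Lam) $$ (a, b)) (\<lambda>a b. B $$ (a, b)) a' c"
        by (rule mult_mat_mm[OF ILc Bc that])
      also have "\<dots> = (\<Sum>k<p. (1 * idm a' k - lam a' k) * b k c)"
        unfolding mm_def b_def by (rule sum.cong[OF refl]) (use that IL in auto)
      finally show ?thesis unfolding inv1' using that by (simp add: idm_def)
    qed
    have "(\<Sum>c<p. idm a c * x c) = (\<Sum>c<p. if c = a then x a else 0)"
      unfolding idm_def by (rule sum.cong) auto
    then have "x a = (\<Sum>c<p. idm a c * x c)" using a(1) by simp
    also have "\<dots> = (\<Sum>c<p. (\<Sum>k<p. (1 * idm a k - lam a k) * b k c) * x c)"
      by (rule sum.cong[OF refl]) (use inv a(1) in auto)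
    also have "\<dots> = (\<Sum>k<p. (1 * idm a k - lam a k) * y k)"
      unfolding y_def sum_distrib_left sum_distrib_right by (subst sum.swap) (simp add: mult.assoc)
    finally have xa: "x a = (\<Sum>k<p. (1 * idm a k - lam a k) * y k)" .
    obtain k where k: "k < p" "y k \<noteq> 0"
    proof (rule ccontr)
      assume "\<not> thesis"
      then have "\<forall>k<p. y k = 0" using that by blast
      then have "x a = 0" unfolding xa by simp
      then show False using a by simp
    qed
    have "(\<Sum>a<p. \<Sum>c<p. x a * sfun S a c * x c) = (\<Sum>a<p. \<Sum>c<p. \<Sum>k<p. x a * (b k a * om k * b k c) * x c)"
      by (intro sum.cong refl) (simp add: sSent sum_distrib_left sum_distrib_right)
    also have "\<dots> = (\<Sum>a<p. \<Sum>k<p. \<Sum>c<p. x a * (b k a * om k * b k c) * x c)"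
      by (rule sum.cong[OF refl]) (rule sum.swap)
    also have "\<dots> = (\<Sum>k<p. \<Sum>a<p. \<Sum>c<p. x a * (b k a * om k * b k c) * x c)"
      by (rule sum.swap)
    also have "\<dots> = (\<Sum>k<p. om k * (y k * y k))"
      unfolding y_def by (simp add: sum_distrib_left sum_distrib_right ac_simps)
    also have "0 < \<dots>"
    proof (rule sum_pos2[of _ k])
      have "0 < y k * y k" using k(2) by (auto simp: zero_less_mult_iff linorder_neq_iff)
      then show "0 < om k * (y k * y k)" using Op k unfolding om_def by simp
      show "\<And>i. i \<in> {..<p} \<Longrightarrow> 0 \<le> om i * (y i * y i)" using Op unfolding om_def
        by (auto intro: mult_nonneg_nonneg less_imp_le)
    qed (use k in auto)
    finally show "0 < (\<Sum>a<p. \<Sum>c<p. x a * sfun S a c * x c)" .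
  qed
  have key: "sfun S i j - (\<Sum>k\<in>pa E j. sfun S i k * lam k j) = (if i = j then om j else 0)"
    if ij: "i \<le> j" "j < p" for i j
  proof -
    have ip: "i < p" using ij by simp
    have "S * (1\<^sub>m p - Lam) = transpose_mat B * Om * (B * (1\<^sub>m p - Lam))"
      unfolding S by (rule assoc_mult_mat[OF BOc Bc ILc])
    also have "\<dots> = transpose_mat B * Om" unfolding inv2' by (rule right_mult_one_mat[OF BOc])
    finally have e: "S * (1\<^sub>m p - Lam) = transpose_mat B * Om" .
    have "(S * (1\<^sub>m p - Lam)) $$ (i, j) = mm p (\<lambda>a b. S $$ (a, b)) (\<lambda>a b. (1\<^sub>m p - Lam) $$ (a, b)) i j"
      by (rule mult_mat_mm[OF Sc ILc ip ij(2)])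
    also have "\<dots> = mm p (sfun S) (\<lambda>a b. 1 * idm a b - lam a b) i j"
      by (rule mm_cong) (use sS IL ip ij in auto)
    also have "\<dots> = mm p (sfun S) idm i j - (\<Sum>k<p. sfun S i k * lam k j)"
      unfolding mm_def by (simp add: right_diff_distrib sum_subtractf)
    also have "mm p (sfun S) idm i j = sfun S i j" by (rule mm_idm_right[OF ij(2)])
    also have "(\<Sum>k<p. sfun S i k * lam k j) = (\<Sum>k\<in>pa E j. sfun S i k * lam k j)"
    proof (rule sum.mono_neutral_right)
      show "pa E j \<subseteq> {..<p}" using pa_sub ij by fastforce
    qed (auto simp: lam_def pa_def)
    finally have "sfun S i j - (\<Sum>k\<in>pa E j. sfun S i k * lam k j) = b j i * om j"
      using e BO[OF ip ij(2)] by simp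
    then show ?thesis using bdiag blow ij by (cases "i = j") auto
  qed
  show ?thesis
  proof (rule that[of om lam])
    show "pd p (sfun S)" by (rule pd)
    show "\<And>i. i < p \<Longrightarrow> 0 < om i" using Op by (simp add: om_def)
    show "\<And>i k. i < p \<Longrightarrow> k < p \<Longrightarrow> cV i = cV k \<Longrightarrow> om i = om k" using Oeq unfolding om_def by blast
    show "lam i j = lam k l" if a: "(i, j) \<in> E" "(k, l) \<in> E" "cE (i, j) = cE (k, l)" for i j k l
    proof -
      have "Lam $$ (i, j) = Lam $$ (k, l)" using bspec[OF Leq a(1)] a(2,3) by auto
      then show ?thesis using a(1,2) by (simp add: lam_def)
    qed
  qed (rule key)
qed

end




context cdag
begin

lemma pa_sub_p: "j < p \<Longrightarrow> pa E j \<subseteq> {..<p}"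
  using pa_sub by fastforce

lemma model_eval:
  assumes S: "S \<in> model p E cV cE"
  shows "pd p (sfun S) \<and> (\<forall>g \<in> gens p E cV cE. evS (sfun S) g = 0)"
proof -
  obtain om lam where pd: "pd p (sfun S)"
    and omp: "\<And>i. i < p \<Longrightarrow> 0 < om i"
    and omc: "\<And>i k. i < p \<Longrightarrow> k < p \<Longrightarrow> cV i = cV k \<Longrightarrow> om i = om k"
    and lamc: "\<And>i j k l. (i, j) \<in> E \<Longrightarrow> (k, l) \<in> E \<Longrightarrow> cE (i, j) = cE (k, l) \<Longrightarrow> lam i j = lam k l"
    and key: "\<And>i j. i \<le> j \<Longrightarrow> j < p \<Longrightarrow> sfun S i j - (\<Sum>k\<in>pa E j. sfun S i k * lam k j) = (if i = j then om j else 0)"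
    using model_analysis[OF S] by blast
  define s where "s = sfun S"
  have sy: "symf s" unfolding s_def by (rule symf_sfun)
  define d where "d j = pmin s (pa E j)" for j
  define n where "n k j = cmin s k j (pa E j - {k})" for k j
  have dpos: "0 < d j" if "j < p" for j
    unfolding d_def s_def by (rule pd_minor_pos[OF pd pa_sub_p[OF that]])
  have L1s: "cmin s i j (pa E j) = s i j * d j - (\<Sum>k\<in>pa E j. s i k * n k j)" for i j
    unfolding d_def n_def by (rule L1_set[OF pa_finite])
  have nlam: "n k j = d j * lam k j" if j: "j < p" and k: "k \<in> pa E j" for k j
  proof -
    have "n k j - d j * lam k j = 0"
    proof (rule pd_inj[OF pd pa_sub_p[OF j], where z = "\<lambda>k. n k j - d j * lam k j"])
      fix i assume i: "i \<in> pa E j"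
      have ij: "i \<le> j" using i pa_sub by fastforce
      have "(\<Sum>k\<in>pa E j. s i k * n k j) = s i j * d j"
        using L1s[of i j] cmin_dup[OF pa_finite i, of s j] by simp
      moreover have "s i j - (\<Sum>k\<in>pa E j. s i k * lam k j) = 0"
        using key[OF ij j] i pa_sub unfolding s_def by fastforce
      ultimately show "(\<Sum>k\<in>pa E j. sfun S i k * (n k j - d j * lam k j)) = 0"
        unfolding s_def by (simp add: right_diff_distrib sum_subtractf sum_distrib_left[symmetric] algebra_simps)
    qed (rule k)
    then show ?thesis by simp
  qed
  have cm: "cmin s i j (pa E j) = d j * (if i = j then om j else 0)" if ij: "i \<le> j" "j < p" for i j
  proof -
    have "(\<Sum>k\<in>pa E j. s i k * n k j) = d j * (\<Sum>k\<in>pa E j. s i k * lam k j)"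
      unfolding sum_distrib_left by (rule sum.cong[OF refl]) (simp add: nlam[OF ij(2)] ac_simps)
    then have "cmin s i j (pa E j) = d j * (s i j - (\<Sum>k\<in>pa E j. s i k * lam k j))"
      unfolding L1s by (simp add: algebra_simps)
    then show ?thesis using key[OF ij] unfolding s_def by simp
  qed
  have W: "pmin s (insert j (pa E j)) = d j * om j" if j: "j < p" for j
  proof -
    have "pmin s (insert j (pa E j)) = cmin s j j (pa E j)"
      by (rule L2_set[OF pa_finite]) (use pa_sub in fastforce)
    then show ?thesis using cm[OF le_refl j] by simp
  qed
  interpret h: comm_ring_hom "evS s" by (rule evS_hom)
  have "evS s g = 0" if g: "g \<in> gens p E cV cE" for g
  proof -
    from g consider
      (a) i j where "g = cminor i j (pa E j)" "i < j" "j < p" "(i, j) \<notin> E"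
    | (b) i j where "g = pminor (insert i (pa E i)) * pminor (pa E j) - pminor (insert j (pa E j)) * pminor (pa E i)"
        "i < p" "j < p" "cV i = cV j"
    | (c) i j k l where "g = cminor i j (pa E j - {i}) * pminor (pa E l) - cminor k l (pa E l - {k}) * pminor (pa E j)"
        "(i, j) \<in> E" "(k, l) \<in> E" "cE (i, j) = cE (k, l)"
      unfolding gens_def by blast
    then show ?thesis
    proof cases
      case a
      then show ?thesis using cm[of i j] by (simp add: evS_cminor[OF sy])
    next
      case b
      then show ?thesis using W[of i] W[of j] omc[of i j]
        by (simp add: evS_pminor[OF sy] h.hom_mult h.hom_minus d_def[symmetric])
    next
      case c
      have jl: "j < p" "l < p" using c edge by auto
      have ij: "i \<in> pa E j" "k \<in> pa E l" using c by (auto simp: pa_def)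
      show ?thesis using c nlam[OF jl(1) ij(1)] nlam[OF jl(2) ij(2)] lamc[of i j k l]
        by (simp add: evS_pminor[OF sy] evS_cminor[OF sy] h.hom_mult h.hom_minus d_def[symmetric] n_def[symmetric])
    qed
  qed
  then show ?thesis using pd unfolding s_def by blast
qed

lemma S_eval_nonzero:
  assumes "pd p s" "t \<in> S_G p E" "symf s"
  shows "evS s t \<noteq> 0"
proof -
  interpret h: comm_ring_hom "evS s" by (rule evS_hom)
  obtain k where t: "t = (\<Prod>i\<in>{0..<p}. pminor (pa E i) ^ k i)" using assms(2) unfolding S_G_def by blast
  have "evS s t = (\<Prod>i\<in>{0..<p}. pmin s (pa E i) ^ k i)"
    unfolding t h.hom_prod h.hom_power evS_pminor[OF assms(3)] ..
  also have "\<dots> > 0"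
    by (rule prod_pos) (auto intro!: zero_less_power pd_minor_pos[OF assms(1)] pa_sub_p)
  finally show ?thesis by simp
qed

lemma ideal_gen_vanish:
  assumes "x \<in> ideal_gen q G" "\<And>g. g \<in> G \<Longrightarrow> evS s g = 0"
  shows "evS s x = 0"
proof -
  interpret h: comm_ring_hom "evS s" by (rule evS_hom)
  obtain F hh where "finite F" "F \<subseteq> G" "x = (\<Sum>g\<in>F. hh g * g)"
    using assms(1) unfolding ideal_gen_def by blast
  then show ?thesis using assms(2) by (auto simp: h.hom_sum h.hom_mult intro!: sum.neutral)
qed

lemma colon_sub_vanishing:
  "colon p (I_Gc p E cV cE) (S_G p E) \<subseteq> vanishing_ideal p E cV cE"
proof
  fix f assume "f \<in> colon p (I_Gc p E cV cE) (S_G p E)"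
  then obtain t where f: "f \<in> sym_ring p" and t: "t \<in> S_G p E" and ft: "f * t \<in> I_Gc p E cV cE"
    unfolding colon_def by blast
  have "eval_poly S f = 0" if S: "S \<in> model p E cV cE" for S
  proof -
    interpret h: comm_ring_hom "evS (sfun S)" by (rule evS_hom)
    have me: "pd p (sfun S)" "\<forall>g \<in> gens p E cV cE. evS (sfun S) g = 0" using model_eval[OF S] by auto
    have "evS (sfun S) (f * t) = 0"
      by (rule ideal_gen_vanish[OF ft[unfolded I_Gc_def]]) (use me in auto)
    moreover have "evS (sfun S) t \<noteq> 0" by (rule S_eval_nonzero[OF me(1) t symf_sfun])
    ultimately have "evS (sfun S) f = 0" by (simp add: h.hom_mult)
    then show ?thesis using f eval_poly_evS by (simp add: sym_ring_goodp)
  qed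
  then show "f \<in> vanishing_ideal p E cV cE" using f unfolding vanishing_ideal_def by blast
qed

end




lemma goodp_pminor:
  assumes "K \<subseteq> {..<p}"
  shows "goodp (symV p) (pminor K)"
proof -
  have fK: "finite K" using assms finite_subset by blast
  have ks: "set (sorted_list_of_set K) \<subseteq> {..<p}" using fK assms(1) by simp
  have n1: "sorted_list_of_set K ! a < p" if "a < length (sorted_list_of_set K)" for a
    using subsetD[OF ks nth_mem[OF that]] by simp
  show ?thesis unfolding pminor_def submat_sym_def
    by (rule goodp_det) (auto intro!: goodp_sigma n1)
qed

lemma goodp_cminor:
  assumes "K \<subseteq> {..<p}" "i < p" "j < p"
  shows "goodp (symV p) (cminor i j K)"
proof -
  have fK: "finite K" using assms finite_subset by blast
  have ks: "set (sorted_list_of_set K) \<subseteq> {..<p}" using fK assms(1) by simp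
  have n1: "(i # sorted_list_of_set K) ! a < p" if "a < length (i # sorted_list_of_set K)" for a
    using that ks assms(2) nth_mem[OF that] by auto
  have n2: "(j # sorted_list_of_set K) ! a < p" if "a < length (j # sorted_list_of_set K)" for a
    using that ks assms(3) nth_mem[OF that] by auto
  show ?thesis unfolding cminor_def submat_sym_def
    by (rule goodp_det) (auto intro!: goodp_sigma n1 n2)
qed

lemma hom_mpow:
  assumes "comm_ring_hom h"
  shows "h (mpow p A n i j) = mpow p (\<lambda>i j. h (A i j)) n i j"
proof -
  interpret comm_ring_hom h by fact
  show ?thesis
    by (induction n arbitrary: i j) (simp_all add: idm_def mm_def hom_sum hom_mult)
qed

lemma mpow_scale: "mpow p (\<lambda>i j. c * A i j) n i j = c ^ n * mpow p A n i j"
  by (induction n arbitrary: i j) (simp_all add: mm_def sum_distrib_left ac_simps)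

lemma goodp_mpow:
  assumes "\<And>i j. goodp V (A i j)"
  shows "goodp V (mpow p A n i j)"
  by (induction n arbitrary: i j) (auto simp: idm_def mm_def intro!: goodp_sum goodp_mult assms)

lemma goodp_neuinv:
  assumes "goodp V c" "\<And>i j. goodp V (A i j)"
  shows "goodp V (neuinv p c A i j)"
  unfolding neuinv_def by (intro goodp_sum goodp_mult goodp_power goodp_mpow assms)

context cdag
begin

lemma pa_sub_all: "pa E j \<subseteq> {..<p}"
  using edge unfolding pa_def by fastforce

lemma goodp_Dj: "goodp (symV p) (Dj j)"
  unfolding Dj_def by (rule goodp_pminor[OF pa_sub_all])

lemma goodp_Dall: "goodp (symV p) Dall"
  unfolding Dall_def by (intro goodp_prod goodp_Dj)

lemma goodp_Qj: "goodp (symV p) (Qj j)"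
  unfolding Qj_def by (intro goodp_prod goodp_Dj)

lemma goodp_Am: "goodp (symV p) (Am k j)"
proof (cases "(k, j) \<in> E")
  case True
  then have "k < p" "j < p" using edge[OF True] by auto
  then show ?thesis using True unfolding Am_def Nn_def
    by (auto intro!: goodp_mult goodp_Qj goodp_cminor simp: subset_iff pa_def dest: edge)
qed (simp add: Am_def)

lemma goodp_Ah: "goodp (symV p) (Ah k j)"
  unfolding Ah_def by (auto intro: goodp_Am)

lemma goodp_wv: "j < p \<Longrightarrow> goodp (symV p) (wv j)"
  unfolding wv_def Ww_def using pa_sub_all
  by (intro goodp_mult goodp_Qj goodp_pminor) auto

lemma goodp_wh: "j < p \<Longrightarrow> goodp (symV p) (wh j)"
  unfolding wh_def using repV by (auto intro: goodp_wv)

lemma goodp_Ch: "goodp (symV p) (Ch i j)"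
  unfolding Ch_def by (intro goodp_neuinv goodp_Dall goodp_Ah)

lemma goodp_Pm: "goodp (symV p) (Pm i j)"
  unfolding Pm_def by (intro goodp_mult goodp_Dall goodp_sum goodp_Ch goodp_wh) auto

lemma repE_eq: "cE e = cE e' \<Longrightarrow> repE e = repE e'"
  unfolding repE_def by simp

lemma repV_eq: "cV i = cV j \<Longrightarrow> repV i = repV j"
  unfolding repV_def by simp

lemma eval_Pm:
  assumes sy: "symf s" and pd: "pd p s"
  obtains Mm where "Mm \<in> model p E cV cE" "0 < evS s Dall"
    "\<And>i j. i < p \<Longrightarrow> j < p \<Longrightarrow> evS s (Pm i j) = evS s Dall ^ (2 * p) * Mm $$ (i, j)"
proof -
  interpret h: comm_ring_hom "evS s" by (rule evS_hom)
  define e where "e = evS s"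
  define dd where "dd j = pmin s (pa E j)" for j
  have ddpos: "0 < dd j" for j unfolding dd_def by (rule pd_minor_pos[OF pd pa_sub_all])
  have eDj: "e (Dj j) = dd j" for j unfolding e_def dd_def Dj_def by (rule evS_pminor[OF sy])
  define \<delta> where "\<delta> = e Dall"
  have \<delta>pos: "0 < \<delta>" unfolding \<delta>_def Dall_def e_def h.hom_prod
    using ddpos eDj[unfolded e_def] by (auto intro: prod_pos)
  have \<delta>split: "\<delta> = dd j * e (Qj j)" if "j < p" for j
    unfolding \<delta>_def Dall_split[OF that] e_def h.hom_mult eDj[unfolded e_def] ..
  define \<Lambda> where "\<Lambda> k j = (if (k, j) \<in> E then e (Nn (fst (repE (k, j))) (snd (repE (k, j)))) / dd (snd (repE (k, j))) else 0)" for k j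
  have eAh: "e (Ah k j) = \<delta> * \<Lambda> k j" for k j
  proof (cases "(k, j) \<in> E")
    case True
    obtain k' l where r: "repE (k, j) = (k', l)" by fastforce
    have kl: "(k', l) \<in> E" using repE[OF True] r by auto
    have lp: "l < p" using edge[OF kl] by simp
    have "e (Ah k j) = e (Nn k' l) * e (Qj l)"
      using True kl by (simp add: Ah_def r Am_def e_def h.hom_mult)
    also have "\<dots> = \<delta> * (e (Nn k' l) / dd l)"
      unfolding \<delta>split[OF lp] using ddpos[of l] by (simp add: field_simps)
    finally show ?thesis using True by (simp add: \<Lambda>_def r)
  qed (simp add: Ah_def \<Lambda>_def e_def)
  define \<Omega> where "\<Omega> j = e (Ww (repV j)) / dd (repV j)" for j
  have eWh: "e (wh j) = \<delta> * \<Omega> j" if "j < p" for j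
  proof -
    have r: "repV j < p" using repV[OF that] by simp
    show ?thesis unfolding wh_def wv_def \<Omega>_def e_def h.hom_mult \<delta>split[OF r, unfolded e_def]
      using ddpos[of "repV j"] unfolding e_def by (simp add: field_simps)
  qed
  have \<Omega>pos: "0 < \<Omega> j" if "j < p" for j
  proof -
    have r: "repV j < p" using repV[OF that] by simp
    have "0 < e (Ww (repV j))" unfolding e_def Ww_def evS_pminor[OF sy]
      by (rule pd_minor_pos[OF pd]) (use r pa_sub_all in auto)
    then show ?thesis unfolding \<Omega>_def using ddpos by simp
  qed
  have \<Lambda>su: "\<And>i j. j \<le> i \<Longrightarrow> \<Lambda> i j = 0" using edge by (fastforce simp: \<Lambda>_def)
  define Bt where "Bt = neuinv p (1::real) \<Lambda>"
  have eCh: "e (Ch i j) = \<delta> ^ (p - 1) * Bt i j" for i j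
  proof -
    have "e (Ch i j) = (\<Sum>k<p. \<delta> ^ (p - Suc k) * mpow p (\<lambda>i j. \<delta> * \<Lambda> i j) k i j)"
      unfolding Ch_def neuinv_def e_def h.hom_sum h.hom_mult h.hom_power hom_mpow[OF evS_hom]
      by (simp add: eAh[unfolded e_def] \<delta>_def[unfolded e_def])
    also have "\<dots> = (\<Sum>k<p. \<delta> ^ (p - 1) * mpow p \<Lambda> k i j)"
    proof (rule sum.cong[OF refl])
      fix k assume "k \<in> {..<p}"
      then have "p - Suc k + k = p - 1" by simp
      then show "\<delta> ^ (p - Suc k) * mpow p (\<lambda>i j. \<delta> * \<Lambda> i j) k i j = \<delta> ^ (p - 1) * mpow p \<Lambda> k i j"
        unfolding mpow_scale by (metis (no_types) mult.assoc power_add)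
    qed
    also have "\<dots> = \<delta> ^ (p - 1) * Bt i j"
      unfolding Bt_def neuinv_def by (simp add: sum_distrib_left)
    finally show ?thesis .
  qed
  define Mf where "Mf i j = (\<Sum>k<p. Bt k i * \<Omega> k * Bt k j)" for i j
  have ePm: "e (Pm i j) = \<delta> ^ (2 * p) * Mf i j" if ij: "i < p" "j < p" for i j
  proof -
    have p1: "\<delta> * \<delta> ^ (p - 1) = \<delta> ^ p" using ij by (cases p) auto
    have "e (Pm i j) = \<delta> * (\<Sum>k<p. \<delta> ^ (p - 1) * Bt k i * (\<delta> * \<Omega> k) * (\<delta> ^ (p - 1) * Bt k j))"
      unfolding Pm_def e_def h.hom_mult h.hom_sum
      by (simp add: eCh[unfolded e_def] eWh[unfolded e_def] \<delta>_def[unfolded e_def])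
    also have "\<dots> = (\<delta> * \<delta> ^ (p - 1)) * (\<delta> * \<delta> ^ (p - 1)) * Mf i j"
      unfolding Mf_def sum_distrib_left by (rule sum.cong[OF refl]) (simp add: ac_simps)
    also have "\<dots> = \<delta> ^ (2 * p) * Mf i j" unfolding p1 by (simp add: mult_2 power_add)
    finally show ?thesis .
  qed
  define Bm where "Bm = mat p p (\<lambda>(i, j). Bt i j)"
  define Om where "Om = mat p p (\<lambda>(i, j). if i = j then \<Omega> i else 0)"
  define Lm where "Lm = mat p p (\<lambda>(i, j). \<Lambda> i j)"
  have Bc: "Bm \<in> carrier_mat p p" and Oc: "Om \<in> carrier_mat p p" and Lc: "Lm \<in> carrier_mat p p"
    by (simp_all add: Bm_def Om_def Lm_def)
  have ILc: "1\<^sub>m p - Lm \<in> carrier_mat p p" using Lc by (simp add: minus_carrier_mat)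
  have inv1: "(1\<^sub>m p - Lm) * Bm = 1\<^sub>m p"
  proof (rule eq_matI)
    fix i j assume ij: "i < dim_row (1\<^sub>m p :: real mat)" "j < dim_col (1\<^sub>m p :: real mat)"
    then have ij': "i < p" "j < p" by auto
    have "((1\<^sub>m p - Lm) * Bm) $$ (i, j) = mm p (\<lambda>a b. (1\<^sub>m p - Lm) $$ (a, b)) (\<lambda>a b. Bm $$ (a, b)) i j"
      by (rule mult_mat_mm[OF ILc Bc ij'])
    also have "\<dots> = mm p (\<lambda>a b. 1 * idm a b - \<Lambda> a b) (neuinv p 1 \<Lambda>) i j"
      by (rule mm_cong) (use ij' in \<open>auto simp: Bm_def Lm_def Bt_def idm_def\<close>)
    also have "\<dots> = 1 ^ p * idm i j" by (rule neuinv_right[OF \<Lambda>su ij'])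
    finally show "((1\<^sub>m p - Lm) * Bm) $$ (i, j) = 1\<^sub>m p $$ (i, j)" using ij' by (simp add: idm_def)
  qed (use Lc Bc in auto)
  have inv2: "Bm * (1\<^sub>m p - Lm) = 1\<^sub>m p"
    by (rule mat_mult_left_right_inverse[OF ILc Bc inv1])
  define Mm where "Mm = transpose_mat Bm * Om * Bm"
  have BOc: "transpose_mat Bm * Om \<in> carrier_mat p p" using Bc Oc by simp
  have BO: "(transpose_mat Bm * Om) $$ (i, k) = Bt k i * \<Omega> k" if "i < p" "k < p" for i k
  proof -
    have "(transpose_mat Bm * Om) $$ (i, k) = mm p (\<lambda>a b. transpose_mat Bm $$ (a, b)) (\<lambda>a b. Om $$ (a, b)) i k"
      by (rule mult_mat_mm[OF _ Oc that]) (use Bc in simp)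
    also have "\<dots> = (\<Sum>l<p. if l = k then Bt k i * \<Omega> k else 0)"
      unfolding mm_def by (rule sum.cong[OF refl]) (use that Bc in \<open>auto simp: Bm_def Om_def\<close>)
    finally show ?thesis using that by simp
  qed
  have Ment: "Mm $$ (i, j) = Mf i j" if "i < p" "j < p" for i j
  proof -
    have "Mm $$ (i, j) = mm p (\<lambda>a b. (transpose_mat Bm * Om) $$ (a, b)) (\<lambda>a b. Bm $$ (a, b)) i j"
      unfolding Mm_def by (rule mult_mat_mm[OF BOc Bc that])
    also have "\<dots> = Mf i j"
      unfolding mm_def Mf_def
    proof (rule sum.cong[OF refl])
      fix k assume k: "k \<in> {..<p}"
      have "Bm $$ (k, j) = Bt k j" using k that by (simp add: Bm_def)
      then show "(transpose_mat Bm * Om) $$ (i, k) * Bm $$ (k, j) = Bt k i * \<Omega> k * Bt k j"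
        using BO[OF that(1)] k by simp
    qed
    finally show ?thesis .
  qed
  have "Mm \<in> model p E cV cE"
    unfolding model_def
  proof (intro CollectI exI conjI)
    show "Mm = transpose_mat Bm * Om * Bm" by (rule Mm_def)
    show "Lm \<in> carrier_mat p p" "Om \<in> carrier_mat p p" "Bm \<in> carrier_mat p p" by (rule Lc, rule Oc, rule Bc)
    show "\<forall>i<p. \<forall>j<p. i \<noteq> j \<longrightarrow> Om $$ (i, j) = 0" by (simp add: Om_def)
    show "\<forall>i<p. 0 < Om $$ (i, i)" by (simp add: Om_def \<Omega>pos)
    show "\<forall>i<p. \<forall>j<p. (i, j) \<notin> E \<longrightarrow> Lm $$ (i, j) = 0" by (simp add: Lm_def \<Lambda>_def)
    show "\<forall>i<p. \<forall>k<p. cV i = cV k \<longrightarrow> Om $$ (i, i) = Om $$ (k, k)"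
    proof (intro allI impI)
      fix i k assume a: "i < p" "k < p" "cV i = cV k"
      show "Om $$ (i, i) = Om $$ (k, k)" using a by (simp add: Om_def \<Omega>_def repV_eq[OF a(3)])
    qed
    show "\<forall>(i, j)\<in>E. \<forall>(k, l)\<in>E. cE (i, j) = cE (k, l) \<longrightarrow> Lm $$ (i, j) = Lm $$ (k, l)"
    proof (clarify)
      fix i j k l assume a: "(i, j) \<in> E" "(k, l) \<in> E" "cE (i, j) = cE (k, l)"
      have "i < p" "j < p" "k < p" "l < p" using edge[OF a(1)] edge[OF a(2)] by auto
      then show "Lm $$ (i, j) = Lm $$ (k, l)" using a repE_eq[OF a(3)] by (simp add: Lm_def \<Lambda>_def)
    qed
    show "inverts_mat (1\<^sub>m p - Lm) Bm" unfolding inverts_mat_def using inv1 Lc by simp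
    show "inverts_mat Bm (1\<^sub>m p - Lm)" unfolding inverts_mat_def using inv2 Bc by simp
  qed
  then show ?thesis
  proof (rule that)
    show "0 < evS s Dall" using \<delta>pos unfolding \<delta>_def e_def .
    show "evS s (Pm i j) = evS s Dall ^ (2 * p) * Mm $$ (i, j)" if "i < p" "j < p" for i j
      using ePm[OF that] Ment[OF that] unfolding e_def \<delta>_def by simp
  qed
qed

end




lemma abs_mult_le_sq: "\<bar>a\<bar> * \<bar>b\<bar> \<le> a\<^sup>2 + (b::real)\<^sup>2"
proof -
  have "0 \<le> (\<bar>a\<bar> - \<bar>b\<bar>)\<^sup>2" by simp
  then have "2 * (\<bar>a\<bar> * \<bar>b\<bar>) \<le> a\<^sup>2 + b\<^sup>2" by (simp add: power2_eq_square algebra_simps)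
  moreover have "0 \<le> \<bar>a\<bar> * \<bar>b\<bar>" by simp
  ultimately show ?thesis by linarith
qed

lemma box_pd:
  assumes diag: "\<And>a. a < p \<Longrightarrow> real p + 1 \<le> s a a"
    and off: "\<And>a b. a < p \<Longrightarrow> b < p \<Longrightarrow> a \<noteq> b \<Longrightarrow> \<bar>s a b\<bar> \<le> 1 / (2 * real p + 2)"
  shows "pd p s"
  unfolding pd_def
proof (intro allI impI)
  fix x :: "nat \<Rightarrow> real" assume "\<exists>a<p. x a \<noteq> 0"
  then obtain a0 where a0: "a0 < p" "x a0 \<noteq> 0" by blast
  define \<epsilon> :: real where "\<epsilon> = 1 / (2 * real p + 2)"
  have \<epsilon>0: "0 \<le> \<epsilon>" unfolding \<epsilon>_def by simp
  define lb where "lb a b = (if a = b then (real p + 1) * (x a)\<^sup>2 else 0) - \<epsilon> * ((x a)\<^sup>2 + (x b)\<^sup>2)" for a b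
  have tb: "lb a b \<le> x a * s a b * x b" if ab: "a < p" "b < p" for a b
  proof (cases "a = b")
    case True
    have "(real p + 1) * (x a)\<^sup>2 \<le> s a a * (x a)\<^sup>2"
      using diag[OF ab(1)] by (intro mult_right_mono) auto
    moreover have "0 \<le> \<epsilon> * ((x a)\<^sup>2 + (x a)\<^sup>2)" using \<epsilon>0 by simp
    ultimately show ?thesis using True unfolding lb_def by (simp add: power2_eq_square ac_simps)
  next
    case False
    have "\<bar>x a * s a b * x b\<bar> = \<bar>s a b\<bar> * (\<bar>x a\<bar> * \<bar>x b\<bar>)" by (simp add: abs_mult ac_simps)
    also have "\<dots> \<le> \<epsilon> * ((x a)\<^sup>2 + (x b)\<^sup>2)"
      using off[OF ab False] abs_mult_le_sq[of "x a" "x b"] \<epsilon>0 unfolding \<epsilon>_def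
      by (intro mult_mono) auto
    finally have "\<bar>x a * s a b * x b\<bar> \<le> \<epsilon> * ((x a)\<^sup>2 + (x b)\<^sup>2)" .
    then have "- (\<epsilon> * ((x a)\<^sup>2 + (x b)\<^sup>2)) \<le> x a * s a b * x b" by linarith
    then show ?thesis using False unfolding lb_def by simp
  qed
  define T where "T = (\<Sum>a<p. (x a)\<^sup>2)"
  have Tpos: "0 < T"
  proof -
    have "(x a0)\<^sup>2 \<le> T" unfolding T_def by (rule member_le_sum) (use a0 in auto)
    moreover have "0 < (x a0)\<^sup>2" using a0 by simp
    ultimately show ?thesis by linarith
  qed
  have s1: "(\<Sum>a<p. \<Sum>b<p. (if a = b then (real p + 1) * (x a)\<^sup>2 else 0)) = (real p + 1) * T"
    unfolding T_def sum_distrib_left by (rule sum.cong[OF refl]) simp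
  have s2: "(\<Sum>a<p. \<Sum>b<p. (x a)\<^sup>2 + (x b)\<^sup>2) = 2 * real p * T"
    unfolding T_def by (simp add: sum.distrib sum_distrib_left[symmetric] algebra_simps)
  have "(\<Sum>a<p. \<Sum>b<p. lb a b) = (real p + 1) * T - \<epsilon> * (2 * real p * T)"
    unfolding lb_def sum_subtractf s1 sum_distrib_left[symmetric] s2 ..
  also have "\<dots> = T * (real p + 1 - real p / (real p + 1))"
    unfolding \<epsilon>_def by (simp add: field_simps)
  also have "\<dots> > 0"
  proof -
    have "real p / (real p + 1) \<le> real p" by (simp add: field_simps)
    then have "real p / (real p + 1) < real p + 1" by linarith
    then show ?thesis using Tpos by simp
  qed
  finally have "0 < (\<Sum>a<p. \<Sum>b<p. lb a b)" .
  also have "\<dots> \<le> (\<Sum>a<p. \<Sum>b<p. x a * s a b * x b)"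
    by (intro sum_mono tb) auto
  finally show "0 < (\<Sum>a<p. \<Sum>b<p. x a * s a b * x b)" .
qed

definition deg :: "((nat \<times> nat) \<Rightarrow>\<^sub>0 nat) \<Rightarrow> nat" where
  "deg m = (\<Sum>v\<in>Poly_Mapping.keys m. Poly_Mapping.lookup m v)"

lemma monv_scale: "monv (\<lambda>v. c * y v) m = c ^ deg m * monv y m"
  unfolding monv_def deg_def by (simp add: power_mult_distrib prod.distrib power_sum)

lemma hom_mono:
  assumes "comm_ring_hom h"
  shows "h (monv y m) = monv (\<lambda>v. h (y v)) m"
proof -
  interpret comm_ring_hom h by fact
  show ?thesis unfolding monv_def by (simp add: hom_prod hom_power)
qed

lemma evS_const: "evS s (const c) = c"
  unfolding evS_def const_def by (simp add: ev_single)

lemma f_expand: "f = (\<Sum>m\<in>Poly_Mapping.keys f. const (Poly_Mapping.lookup f m) * monv Xv m)"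
  using ev_const_Xv[of f] unfolding ev_def by simp

lemma goodp_mono: "(\<And>v. v \<in> Poly_Mapping.keys m \<Longrightarrow> goodp V (y v)) \<Longrightarrow> goodp V (monv y m)"
  unfolding monv_def by (intro goodp_prod goodp_power) auto

context cdag
begin

lemma S_sym: "t \<in> S_G p E \<Longrightarrow> t \<in> sym_ring p"
  unfolding S_G_def sym_ring_goodp
  by (auto intro!: goodp_prod goodp_power goodp_pminor[OF pa_sub_all])

lemma gens_sym: "gens p E cV cE \<subseteq> sym_ring p"
proof
  fix g assume "g \<in> gens p E cV cE"
  then consider
      (a) i j where "g = cminor i j (pa E j)" "i < j" "j < p"
    | (b) i j where "g = pminor (insert i (pa E i)) * pminor (pa E j) - pminor (insert j (pa E j)) * pminor (pa E i)"
        "i < p" "j < p"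
    | (c) i j k l where "g = cminor i j (pa E j - {i}) * pminor (pa E l) - cminor k l (pa E l - {k}) * pminor (pa E j)"
        "(i, j) \<in> E" "(k, l) \<in> E"
    unfolding gens_def by blast
  then show "g \<in> sym_ring p"
  proof cases
    case a then show ?thesis using pa_sub_all by (auto simp: sym_ring_goodp intro!: goodp_cminor)
  next
    case b then show ?thesis using pa_sub_all
      by (auto simp: sym_ring_goodp intro!: goodp_mult goodp_diff goodp_pminor)
  next
    case c
    then have "i < p" "j < p" "k < p" "l < p" using edge[OF c(2)] edge[OF c(3)] by auto
    then show ?thesis using c pa_sub_all
      by (auto simp: sym_ring_goodp intro!: goodp_mult goodp_diff goodp_pminor goodp_cminor)
  qed
qed

lemma Dall_pow_S: "Dall ^ n \<in> S_G p E"
  by (induction n) (auto intro: S_one S_mult Dall_S)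

lemma vanishing_sub_colon: "vanishing_ideal p E cV cE \<subseteq> colon p (I_Gc p E cV cE) (S_G p E)"
proof
  fix f assume fv: "f \<in> vanishing_ideal p E cV cE"
  then have fs: "f \<in> sym_ring p" and fz: "\<And>S. S \<in> model p E cV cE \<Longrightarrow> eval_poly S f = 0"
    unfolding vanishing_ideal_def by auto
  have gf: "goodp (symV p) f" using fs by (simp add: sym_ring_goodp)
  have km: "Poly_Mapping.keys m \<subseteq> symV p" if "m \<in> Poly_Mapping.keys f" for m
    using gf that unfolding goodp_def by blast
  define dg where "dg = (\<Sum>m\<in>Poly_Mapping.keys f. deg m)"
  have degle: "deg m \<le> dg" if "m \<in> Poly_Mapping.keys f" for m
    unfolding dg_def by (rule member_le_sum) (use that in auto)
  define Pv where "Pv v = Pm (fst v) (snd v)" for v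
  define F where "F = (\<Sum>m\<in>Poly_Mapping.keys f. const (Poly_Mapping.lookup f m) * (Dall ^ (2 * p * (dg - deg m)) * monv Pv m))"
  have cgm: "cg (Dall ^ (2 * p * deg m) * monv Xv m) (monv Pv m)" if m: "m \<in> Poly_Mapping.keys f" for m
  proof -
    have "Dall ^ (2 * p * deg m) * monv Xv m = monv (\<lambda>v. Dall ^ (2 * p) * Xv v) m"
      unfolding monv_scale by (simp add: power_mult)
    moreover have "cg (monv (\<lambda>v. Dall ^ (2 * p) * Xv v) m) (monv Pv m)"
      unfolding monv_def
    proof (intro cg_prod cg_power)
      fix v assume v: "v \<in> Poly_Mapping.keys m"
      obtain a b where ab: "v = (a, b)" by fastforce
      have abp: "a \<le> b" "b < p" using km[OF m] v ab by (auto simp: symV_def)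
      have "Xv v = sigma a b" using abp ab by (simp add: sigma_Xv min_def max_def)
      then show "cg (Dall ^ (2 * p) * Xv v) (Pv v)"
        using cg_main[of a b] abp ab by (simp add: Pv_def)
    qed
    ultimately show ?thesis by simp
  qed
  have cgF: "cg (Dall ^ (2 * p * dg) * f) F"
  proof -
    define fe where "fe = (\<Sum>m\<in>Poly_Mapping.keys f. const (Poly_Mapping.lookup f m) * monv Xv m)"
    have ffe: "f = fe" unfolding fe_def by (rule f_expand)
    have "Dall ^ (2 * p * dg) * f = Dall ^ (2 * p * dg) * fe" unfolding ffe ..
    also have "\<dots> = (\<Sum>m\<in>Poly_Mapping.keys f. const (Poly_Mapping.lookup f m) *
        (Dall ^ (2 * p * (dg - deg m)) * (Dall ^ (2 * p * deg m) * monv Xv m)))"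
      unfolding fe_def sum_distrib_left
    proof (rule sum.cong[OF refl])
      fix m assume m: "m \<in> Poly_Mapping.keys f"
      have "2 * p * dg = 2 * p * (dg - deg m) + 2 * p * deg m" using degle[OF m]
        by (simp add: add_mult_distrib2[symmetric])
      then have "Dall ^ (2 * p * dg) = Dall ^ (2 * p * (dg - deg m)) * Dall ^ (2 * p * deg m)"
        by (metis power_add)
      then show "Dall ^ (2 * p * dg) * (const (Poly_Mapping.lookup f m) * monv Xv m) =
          const (Poly_Mapping.lookup f m) * (Dall ^ (2 * p * (dg - deg m)) * (Dall ^ (2 * p * deg m) * monv Xv m))"
        by (simp add: ac_simps)
    qed
    finally have eq: "Dall ^ (2 * p * dg) * f = (\<Sum>m\<in>Poly_Mapping.keys f. const (Poly_Mapping.lookup f m) *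
        (Dall ^ (2 * p * (dg - deg m)) * (Dall ^ (2 * p * deg m) * monv Xv m)))" .
    moreover have "cg (\<Sum>m\<in>Poly_Mapping.keys f. const (Poly_Mapping.lookup f m) *
        (Dall ^ (2 * p * (dg - deg m)) * (Dall ^ (2 * p * deg m) * monv Xv m))) F"
      unfolding F_def by (intro cg_sum cg_mult_left cgm)
    ultimately show ?thesis by simp
  qed
  have gF: "goodp (symV p) F"
    unfolding F_def by (intro goodp_sum goodp_mult goodp_const goodp_power goodp_Dall goodp_mono) (simp add: Pv_def goodp_Pm)
  define A where "A v = (if fst v = snd v then (\<lambda>n. real n) ` {p + 1..} else (\<lambda>n. 1 / real n) ` {2 * p + 2..})" for v :: "nat \<times> nat"
  have infA: "infinite (A v)" for v
  proof (cases "fst v = snd v")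
    case True
    have "inj_on (\<lambda>n. real n) {p + 1..}" by (simp add: inj_on_def)
    then show ?thesis using True unfolding A_def by (simp add: finite_image_iff infinite_Ici)
  next
    case False
    have "inj_on (\<lambda>n. 1 / real n) {2 * p + 2..}" by (auto simp: inj_on_def)
    then show ?thesis using False unfolding A_def by (simp add: finite_image_iff infinite_Ici)
  qed
  have finV: "finite (symV p)"
    by (rule finite_subset[of _ "{..<p} \<times> {..<p}"]) (auto simp: symV_def)
  have F0: "F = 0"
  proof (rule identity_theorem[OF finV gF infA])
    fix x :: "nat \<times> nat \<Rightarrow> real" assume xA: "\<And>v. v \<in> symV p \<Longrightarrow> x v \<in> A v"
    define s where "s a b = x (min a b, max a b)" for a b
    have sy: "symf s" unfolding symf_def s_def by (simp add: min.commute max.commute)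
    have pds: "pd p s"
    proof (rule box_pd)
      fix a assume a: "a < p"
      have "x (a, a) \<in> A (a, a)" using xA a by (simp add: symV_def)
      then show "real p + 1 \<le> s a a" unfolding s_def A_def by auto
    next
      fix a b assume ab: "a < p" "b < p" "a \<noteq> b"
      have "(min a b, max a b) \<in> symV p" using ab by (simp add: symV_def)
      then have "x (min a b, max a b) \<in> A (min a b, max a b)" by (rule xA)
      moreover have "min a b \<noteq> max a b" using ab by (simp add: min_def max_def)
      ultimately obtain n where n: "n \<ge> 2 * p + 2" "s a b = 1 / real n"
        unfolding s_def A_def by auto
      have "real (2 * p + 2) \<le> real n" using n(1) by linarith
      then have "1 / real n \<le> 1 / (2 * real p + 2)" by (intro divide_left_mono) auto
      then show "\<bar>s a b\<bar> \<le> 1 / (2 * real p + 2)" using n by simp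
    qed
    obtain Mm where Mm: "Mm \<in> model p E cV cE" "0 < evS s Dall"
      "\<And>i j. i < p \<Longrightarrow> j < p \<Longrightarrow> evS s (Pm i j) = evS s Dall ^ (2 * p) * Mm $$ (i, j)"
      using eval_Pm[OF sy pds] by blast
    interpret h: comm_ring_hom "evS s" by (rule evS_hom)
    define \<delta> where "\<delta> = evS s Dall"
    have "ev (\<lambda>c. c) x F = evS s F"
      unfolding evS_def by (rule ev_vars[OF gF]) (auto simp: s_def symV_def min_def max_def)
    also have "evS s F = (\<Sum>m\<in>Poly_Mapping.keys f. Poly_Mapping.lookup f m * (\<delta> ^ (2 * p * dg) * monv (\<lambda>v. Mm $$ v) m))"
      unfolding F_def h.hom_sum
    proof (rule sum.cong[OF refl])
      fix m assume m: "m \<in> Poly_Mapping.keys f"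
      have "monv (\<lambda>v. evS s (Pv v)) m = monv (\<lambda>v. \<delta> ^ (2 * p) * Mm $$ v) m"
      proof (rule monv_cong)
        fix v assume v: "v \<in> Poly_Mapping.keys m"
        obtain a b where ab: "v = (a, b)" by fastforce
        have "a < p" "b < p" using km[OF m] v ab by (auto simp: symV_def)
        then show "evS s (Pv v) = \<delta> ^ (2 * p) * Mm $$ v" using Mm(3) ab by (simp add: Pv_def \<delta>_def)
      qed
      also have "\<dots> = \<delta> ^ (2 * p * deg m) * monv (\<lambda>v. Mm $$ v) m"
        unfolding monv_scale by (simp add: power_mult)
      finally have e1: "monv (\<lambda>v. evS s (Pv v)) m = \<delta> ^ (2 * p * deg m) * monv (\<lambda>v. Mm $$ v) m" .
      have "2 * p * dg = 2 * p * (dg - deg m) + 2 * p * deg m" using degle[OF m]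
        by (simp add: add_mult_distrib2[symmetric])
      then have e2: "\<delta> ^ (2 * p * dg) = \<delta> ^ (2 * p * (dg - deg m)) * \<delta> ^ (2 * p * deg m)"
        by (metis power_add)
      show "evS s (const (Poly_Mapping.lookup f m) * (Dall ^ (2 * p * (dg - deg m)) * monv Pv m)) =
          Poly_Mapping.lookup f m * (\<delta> ^ (2 * p * dg) * monv (\<lambda>v. Mm $$ v) m)"
        unfolding h.hom_mult h.hom_power evS_const hom_mono[OF evS_hom] e1 e2 \<delta>_def[symmetric]
        by (simp add: ac_simps)
    qed
    also have "\<dots> = \<delta> ^ (2 * p * dg) * eval_poly Mm f"
      unfolding eval_poly_ev ev_def sum_distrib_left by (rule sum.cong[OF refl]) (simp add: ac_simps)
    also have "eval_poly Mm f = 0" by (rule fz[OF Mm(1)])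
    finally show "ev (\<lambda>c. c) x F = 0" by simp
  qed
  obtain t where t: "t \<in> S_G p E" "t * (Dall ^ (2 * p * dg) * f - F) \<in> Ideal (gens p E cV cE)"
    using cgF unfolding cg_def by blast
  define t' where "t' = t * Dall ^ (2 * p * dg)"
  have t'S: "t' \<in> S_G p E" unfolding t'_def by (intro S_mult t(1) Dall_pow_S)
  have "f * t' \<in> Ideal (gens p E cV cE)" using t(2) unfolding F0 t'_def by (simp add: ac_simps)
  moreover have "f * t' \<in> sym_ring p"
    using fs S_sym[OF t'S] by (simp add: sym_ring_goodp goodp_mult)
  ultimately have "f * t' \<in> I_Gc p E cV cE"
    unfolding I_Gc_def by (intro Ideal_to_ideal_gen gens_sym)
  then show "f \<in> colon p (I_Gc p E cV cE) (S_G p E)"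
    unfolding colon_def using fs t'S by blast
qed

end

theorem theorem4p9:
  fixes p :: nat and E :: "(nat \<times> nat) set"
    and cV :: "nat \<Rightarrow> 'c" and cE :: "nat \<times> nat \<Rightarrow> 'c"
  assumes "dag p E" and "coloring p E cV cE"
  shows "vanishing_ideal p E cV cE = colon p (I_Gc p E cV cE) (S_G p E)"
proof -
  interpret cdag p E cV cE by unfold_locales (rule assms(1))
  show ?thesis using vanishing_sub_colon colon_sub_vanishing by blast
qed


end
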